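(* Let $c>0$ be an integer and let $t$ be a function of the input length $n$. Any language recognized by a Turing machine (with a read-only input tape holding $\rhd w \lhd$ and one read-write work tape) that, on every input of length $n$, uses at most $\lfloor \log(n+2)\rfloor$ work-tape cells, has a work tape alphabet of size at most $2^c$, and runs within $t(n)$ time, can also be recognized by a $(c+5)$-head finite automaton within $t(n)\cdot\left(\left(2c+\tfrac{3}{2}\right)n+2c+2\right)$ time.
   Context: Logarithms are base $2$. For an input string $w$ of length $n$, the input tape contains $\rhd w\lhd$, where $\rhd,\lhd$ are left and right end-markers not in the input alphabet. A $k$-head finite automaton is a finite-state machine with $k$ read-only heads on a tape containing $\rhd w\lhd$, all starting on the left end-marker; in each step, based on its current state and the $k$ symbols scanned by the heads, it changes state and moves each head independently one cell left, one cell right, or leaves it in place; it halts when it enters an accept or reject state or a head moves beyond an end-marker (the latter counting as rejection). It recognizes the set of strings it accepts. "Within $T(n)$ time" means the machine halts within $T(n)$ steps on every input of length $n$. *)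

theory Defs
  imports Complex_Main
begin

datatype 'a tsym = LEnd | REnd | Sym 'a

datatype move = MLeft | MStay | MRight

fun mv :: "move \<Rightarrow> int" where
  "mv MLeft = -1" | "mv MStay = 0" | "mv MRight = 1"

text \<open>The input tape holds LEnd w REnd at positions 0 .. length w + 1.
  Positions outside this range are never read (a head leaving it halts the machine).\<close>
definition tape_at :: "'a list \<Rightarrow> int \<Rightarrow> 'a tsym" where
  "tape_at w i = (if i \<le> 0 then LEnd
                  else if i \<ge> int (length w) + 1 then REnd
                  else Sym (w ! nat (i - 1)))"

definition in_range :: "'a list \<Rightarrow> int \<Rightarrow> bool" where
  "in_range w i \<longleftrightarrow> 0 \<le> i \<and> i \<le> int (length w) + 1"

text \<open>The transition reads the state, the input symbol and the work symbol and returns the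
  new state, the input-head move, the symbol written on the work tape and the work-head move.\<close>
record ('s, 'a, 'g) tm =
  tm_start :: 's
  tm_acc :: "'s set"
  tm_rej :: "'s set"
  tm_blank :: 'g
  tm_delta :: "'s \<Rightarrow> 'a tsym \<Rightarrow> 'g \<Rightarrow> 's \<times> move \<times> 'g \<times> move"

text \<open>Configuration: state, input head position, work head position, work tape contents
  (two-way infinite, indexed by int).\<close>
type_synonym ('s, 'g) tm_conf = "'s \<times> int \<times> int \<times> (int \<Rightarrow> 'g)"

definition tm_init :: "('s, 'a, 'g) tm \<Rightarrow> ('s, 'g) tm_conf" where
  "tm_init M = (tm_start M, 0, 0, \<lambda>_. tm_blank M)"

definition tm_step :: "('s, 'a, 'g) tm \<Rightarrow> 'a list \<Rightarrow> ('s, 'g) tm_conf \<Rightarrow> ('s, 'g) tm_conf" where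
  "tm_step M w cf = (case cf of (q, i, j, tp) \<Rightarrow>
     (case tm_delta M q (tape_at w i) (tp j) of (q', di, g, dj) \<Rightarrow>
        (q', i + mv di, j + mv dj, tp(j := g))))"

definition tm_conf_at :: "('s, 'a, 'g) tm \<Rightarrow> 'a list \<Rightarrow> nat \<Rightarrow> ('s, 'g) tm_conf" where
  "tm_conf_at M w m = (tm_step M w ^^ m) (tm_init M)"

definition tm_halted :: "('s, 'a, 'g) tm \<Rightarrow> 'a list \<Rightarrow> ('s, 'g) tm_conf \<Rightarrow> bool" where
  "tm_halted M w cf \<longleftrightarrow>
     fst cf \<in> tm_acc M \<union> tm_rej M \<or> \<not> in_range w (fst (snd cf))"

text \<open>Accepting halting configuration (leaving the tape counts as rejection).\<close>
definition tm_accepting :: "('s, 'a, 'g) tm \<Rightarrow> 'a list \<Rightarrow> ('s, 'g) tm_conf \<Rightarrow> bool" where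
  "tm_accepting M w cf \<longleftrightarrow> fst cf \<in> tm_acc M \<and> in_range w (fst (snd cf))"

definition tm_first_halt :: "('s, 'a, 'g) tm \<Rightarrow> 'a list \<Rightarrow> nat \<Rightarrow> bool" where
  "tm_first_halt M w m \<longleftrightarrow>
     tm_halted M w (tm_conf_at M w m) \<and> (\<forall>j<m. \<not> tm_halted M w (tm_conf_at M w j))"

definition tm_accepts :: "('s, 'a, 'g) tm \<Rightarrow> 'a list \<Rightarrow> bool" where
  "tm_accepts M w \<longleftrightarrow> (\<exists>m. tm_first_halt M w m \<and> tm_accepting M w (tm_conf_at M w m))"

definition tm_recognizes :: "('s, 'a, 'g) tm \<Rightarrow> 'a list set \<Rightarrow> bool" where
  "tm_recognizes M L \<longleftrightarrow> (\<forall>w. w \<in> L \<longleftrightarrow> tm_accepts M w)"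

definition tm_halts_within :: "('s, 'a, 'g) tm \<Rightarrow> 'a list \<Rightarrow> real \<Rightarrow> bool" where
  "tm_halts_within M w T \<longleftrightarrow> (\<exists>m. real m \<le> T \<and> tm_halted M w (tm_conf_at M w m))"

definition tm_space_within :: "('s, 'a, 'g) tm \<Rightarrow> 'a list \<Rightarrow> int \<Rightarrow> bool" where
  "tm_space_within M w s \<longleftrightarrow>
     (\<forall>m. (\<forall>j<m. \<not> tm_halted M w (tm_conf_at M w j)) \<longrightarrow>
        int (card ((\<lambda>j. fst (snd (snd (tm_conf_at M w j)))) ` {..m})) \<le> s)"

record 'a kfa =
  fa_heads :: nat
  fa_states :: "nat set"
  fa_start :: nat
  fa_acc :: "nat set"
  fa_rej :: "nat set"
  fa_delta :: "nat \<Rightarrow> (nat \<Rightarrow> 'a tsym) \<Rightarrow> nat \<times> (nat \<Rightarrow> move)"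

definition kfa_wf :: "'a kfa \<Rightarrow> bool" where
  "kfa_wf A \<longleftrightarrow> finite (fa_states A) \<and> fa_start A \<in> fa_states A \<and>
     fa_acc A \<subseteq> fa_states A \<and> fa_rej A \<subseteq> fa_states A \<and>
     (\<forall>q \<in> fa_states A. \<forall>s. fst (fa_delta A q s) \<in> fa_states A)"

type_synonym fa_conf = "nat \<times> (nat \<Rightarrow> int)"

definition fa_init :: "'a kfa \<Rightarrow> fa_conf" where
  "fa_init A = (fa_start A, \<lambda>_. 0)"

definition fa_step :: "'a kfa \<Rightarrow> 'a list \<Rightarrow> fa_conf \<Rightarrow> fa_conf" where
  "fa_step A w cf = (case cf of (q, p) \<Rightarrow>
     (case fa_delta A q (\<lambda>i. if i < fa_heads A then tape_at w (p i) else LEnd) of (q', d) \<Rightarrow>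
        (q', \<lambda>i. if i < fa_heads A then p i + mv (d i) else 0)))"

definition fa_conf_at :: "'a kfa \<Rightarrow> 'a list \<Rightarrow> nat \<Rightarrow> fa_conf" where
  "fa_conf_at A w m = (fa_step A w ^^ m) (fa_init A)"

definition fa_heads_ok :: "'a kfa \<Rightarrow> 'a list \<Rightarrow> fa_conf \<Rightarrow> bool" where
  "fa_heads_ok A w cf \<longleftrightarrow> (\<forall>i < fa_heads A. in_range w (snd cf i))"

definition fa_halted :: "'a kfa \<Rightarrow> 'a list \<Rightarrow> fa_conf \<Rightarrow> bool" where
  "fa_halted A w cf \<longleftrightarrow> fst cf \<in> fa_acc A \<union> fa_rej A \<or> \<not> fa_heads_ok A w cf"

definition fa_accepting :: "'a kfa \<Rightarrow> 'a list \<Rightarrow> fa_conf \<Rightarrow> bool" where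
  "fa_accepting A w cf \<longleftrightarrow> fst cf \<in> fa_acc A \<and> fa_heads_ok A w cf"

definition fa_first_halt :: "'a kfa \<Rightarrow> 'a list \<Rightarrow> nat \<Rightarrow> bool" where
  "fa_first_halt A w m \<longleftrightarrow>
     fa_halted A w (fa_conf_at A w m) \<and> (\<forall>j<m. \<not> fa_halted A w (fa_conf_at A w j))"

definition fa_accepts :: "'a kfa \<Rightarrow> 'a list \<Rightarrow> bool" where
  "fa_accepts A w \<longleftrightarrow> (\<exists>m. fa_first_halt A w m \<and> fa_accepting A w (fa_conf_at A w m))"

definition fa_recognizes :: "'a kfa \<Rightarrow> 'a list set \<Rightarrow> bool" where
  "fa_recognizes A L \<longleftrightarrow> (\<forall>w. w \<in> L \<longleftrightarrow> fa_accepts A w)"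

definition fa_halts_within :: "'a kfa \<Rightarrow> 'a list \<Rightarrow> real \<Rightarrow> bool" where
  "fa_halts_within A w T \<longleftrightarrow> (\<exists>m. real m \<le> T \<and> fa_halted A w (fa_conf_at A w m))"

end

theory Submission
  imports Defs "HOL-Library.Countable"
begin

instance move :: countable by countable_datatype

datatype phase = Init | Rd1 | Rd2 | Rd3 | Dec | Wr | Dbl | Hlv | Lx1 | Lx2 | Lx3 | Acc | Rej

instance phase :: countable by countable_datatype

datatype ('s, 'g) ctl = Ctl (ph: phase) (st: 's) (w0: 'g) (w1: 'g) (loc: nat) (ori: bool)
  (kk: nat) (cd: nat) (par: bool) (gold: 'g) (gnew: 'g) (dir: move)

instance ctl :: (countable, countable) countable by countable_datatype

definition stay :: "nat \<Rightarrow> move" where "stay = (\<lambda>_. MStay)"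

definition hI :: nat where "hI = 0"
definition hF :: nat where "hF = 4"
definition hT :: "nat \<Rightarrow> nat" where "hT k = 5 + k"
definition hh :: "bool \<Rightarrow> nat" where "hh b = (if b then 2 else 3)"
definition hl :: "bool \<Rightarrow> nat" where "hl b = (if b then 3 else 2)"

lemmas hdefs = hI_def hF_def hT_def hh_def hl_def

locale sim =
  fixes M :: "('s::finite, 'a::finite, 'g::finite) tm"
    and c :: nat and e :: "'g \<Rightarrow> nat"
  assumes c_pos: "c > 0" and e_inj: "inj e" and e_blank: "e (tm_blank M) = 0"
    and e_lt: "\<And>g. e g < 2 ^ c"
begin

definition bitk :: "'g \<Rightarrow> nat \<Rightarrow> bool" where "bitk g k = odd (e g div 2 ^ k)"

definition decg :: "nat \<Rightarrow> 'g" where "decg n = inv e n"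

definition ready :: "('s, 'g) ctl \<Rightarrow> ('s, 'g) ctl" where
  "ready x = Ctl Rd1 (st x) (w0 x) (w1 x) (loc x) (ori x) 0 0 False (gold x) (gnew x) (dir x)"

definition decide :: "('s, 'g) ctl \<Rightarrow> 'a tsym \<Rightarrow> 'g \<Rightarrow> ('s, 'g) ctl \<times> (nat \<Rightarrow> move)" where
  "decide x a g = (case tm_delta M (st x) a g of (q', di, g', dj) \<Rightarrow>
     if q' \<in> tm_acc M then (Ctl Acc q' (w0 x) (w1 x) (loc x) (ori x) 0 0 False g g' dj, stay(hI := di))
     else if q' \<in> tm_rej M then (Ctl Rej q' (w0 x) (w1 x) (loc x) (ori x) 0 0 False g g' dj, stay(hI := di))
     else if loc x = 0 then
       (case dj of
          MStay \<Rightarrow> (Ctl Rd1 q' g' (w1 x) 0 (ori x) 0 0 False g g' dj, stay(hI := di))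
        | MRight \<Rightarrow> (Ctl Rd1 q' g' (w1 x) 1 (ori x) 0 0 False g g' dj, stay(hI := di))
        | MLeft \<Rightarrow> (Ctl Lx1 q' (tm_blank M) g' 0 (ori x) 0 0 False (w1 x) g' dj, stay(hI := di)))
     else if loc x = 1 then
       (case dj of
          MStay \<Rightarrow> (Ctl Rd1 q' (w0 x) g' 1 (ori x) 0 0 False g g' dj, stay(hI := di))
        | MRight \<Rightarrow> (Ctl Rd1 q' (w0 x) g' 2 (ori x) 0 0 False g g' dj, stay(hI := di))
        | MLeft \<Rightarrow> (Ctl Rd1 q' (w0 x) g' 0 (ori x) 0 0 False g g' dj, stay(hI := di)))
     else (Ctl Wr q' (w0 x) (w1 x) (loc x) (ori x) 0 0 False g g' dj, stay(hI := di)))"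

definition act :: "('s, 'g) ctl \<Rightarrow> (nat \<Rightarrow> 'a tsym) \<Rightarrow> ('s, 'g) ctl \<times> (nat \<Rightarrow> move)" where
  "act x sy = (let z = (\<lambda>h. sy h = LEnd); ov = ori x; k = kk x; ee = par x in
    case ph x of
      Init \<Rightarrow> (ready x, stay(hh ov := MRight))
    | Rd1 \<Rightarrow>
        (if loc x < 2 then decide x (sy hI) (if loc x = 0 then w0 x else w1 x)
         else if z (hT k) then
           (if z (hh ov) then (Ctl Rd2 (st x) (w0 x) (w1 x) (loc x) (\<not> ov) k (cd x) (\<not> ee) (gold x) (gnew x) (dir x), stay)
            else (Ctl Rd2 (st x) (w0 x) (w1 x) (loc x) ov k (cd x) ee (gold x) (gnew x) (dir x), stay))
         else if z (hh ov) then
           (Ctl Rd1 (st x) (w0 x) (w1 x) (loc x) (\<not> ov) k (cd x) (\<not> ee) (gold x) (gnew x) (dir x),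
            stay(hT k := MLeft, hF := MRight, hh (\<not> ov) := MLeft, hl (\<not> ov) := MRight))
         else (x, stay(hT k := MLeft, hF := MRight, hh ov := MLeft, hl ov := MRight)))
    | Rd2 \<Rightarrow>
        (if z hF then (Ctl Rd3 (st x) (w0 x) (w1 x) (loc x) ov k (cd x) ee (gold x) (gnew x) (dir x), stay)
         else (x, stay(hF := MLeft, hT k := MRight)))
    | Rd3 \<Rightarrow>
        (if z (hl ov) then
           (if Suc k < c then (Ctl Rd1 (st x) (w0 x) (w1 x) (loc x) ov (Suc k) ((cd x + (if ee then 2 ^ k else 0)) mod 2 ^ c) False (gold x) (gnew x) (dir x), stay)
            else (Ctl Dec (st x) (w0 x) (w1 x) (loc x) ov 0 ((cd x + (if ee then 2 ^ k else 0)) mod 2 ^ c) False (gold x) (gnew x) (dir x), stay))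
         else (x, stay(hl ov := MLeft, hh ov := MRight)))
    | Dec \<Rightarrow> decide x (sy hI) (decg (cd x))
    | Wr \<Rightarrow>
        (if c \<le> k then
           (case dir x of
              MStay \<Rightarrow> (ready x, stay)
            | MRight \<Rightarrow> (Ctl Dbl (st x) (w0 x) (w1 x) (loc x) ov k (cd x) False (gold x) (gnew x) (dir x), stay)
            | MLeft \<Rightarrow> (Ctl Hlv (st x) (w0 x) (w1 x) (loc x) ov k (cd x) False (gold x) (gnew x) (dir x), stay))
         else if bitk (gold x) k = bitk (gnew x) k then
           (Ctl Wr (st x) (w0 x) (w1 x) (loc x) ov (Suc k) (cd x) ee (gold x) (gnew x) (dir x), stay)
         else if z (hh ov) then
           (Ctl Wr (st x) (w0 x) (w1 x) (loc x) (\<not> ov) (Suc k) (cd x) ee (gold x) (gnew x) (dir x), stay)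
         else (x, stay(hT k := (if bitk (gnew x) k then MRight else MLeft), hh ov := MLeft, hl ov := MRight)))
    | Dbl \<Rightarrow>
        (if z (hh ov) \<and> \<not> ee then (ready (Ctl Dbl (st x) (w0 x) (w1 x) (loc x) (\<not> ov) k (cd x) ee (gold x) (gnew x) (dir x)), stay)
         else if \<not> ee then (Ctl Dbl (st x) (w0 x) (w1 x) (loc x) ov k (cd x) True (gold x) (gnew x) (dir x), stay(hh ov := MLeft, hl ov := MRight))
         else (Ctl Dbl (st x) (w0 x) (w1 x) (loc x) ov k (cd x) False (gold x) (gnew x) (dir x), stay(hl ov := MRight)))
    | Hlv \<Rightarrow>
        (if z (hh ov) then
           (if z (hl ov) then (ready (Ctl Hlv (st x) (w0 x) (w1 x) 1 ov k (cd x) ee (gold x) (gnew x) (dir x)), stay(hh ov := MRight))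
            else (ready (Ctl Hlv (st x) (w0 x) (w1 x) (loc x) (\<not> ov) k (cd x) ee (gold x) (gnew x) (dir x)), stay))
         else (Ctl Hlv (st x) (w0 x) (w1 x) (loc x) ov k (cd x) (\<not> ee) (gold x) (gnew x) (dir x),
               stay(hh ov := MLeft, hl ov := (if ee then MRight else MStay))))
    | Lx1 \<Rightarrow>
        (if z (hT k) \<and> \<not> ee then (Ctl Lx2 (st x) (w0 x) (w1 x) (loc x) ov k (cd x) ee (gold x) (gnew x) (dir x), stay)
         else if \<not> ee then (Ctl Lx1 (st x) (w0 x) (w1 x) (loc x) ov k (cd x) True (gold x) (gnew x) (dir x), stay(hT k := MLeft, hF := MRight))
         else (Ctl Lx1 (st x) (w0 x) (w1 x) (loc x) ov k (cd x) False (gold x) (gnew x) (dir x), stay(hF := MRight)))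
    | Lx2 \<Rightarrow> (Ctl Lx3 (st x) (w0 x) (w1 x) (loc x) ov k (cd x) ee (gold x) (gnew x) (dir x),
               stay(hF := (if bitk (gold x) k then MRight else MStay)))
    | Lx3 \<Rightarrow>
        (if z hF then
           (if Suc k < c then (Ctl Lx1 (st x) (w0 x) (w1 x) (loc x) ov (Suc k) (cd x) False (gold x) (gnew x) (dir x), stay)
            else (ready x, stay))
         else (x, stay(hF := MLeft, hT k := MRight)))
    | Acc \<Rightarrow> (x, stay)
    | Rej \<Rightarrow> (x, stay))"

definition CS :: "('s, 'g) ctl set" where
  "CS = {x. kk x \<le> c \<and> cd x < 2 ^ c \<and> loc x \<le> 2}"

definition x0 :: "('s, 'g) ctl" where
  "x0 = Ctl (if tm_start M \<in> tm_acc M then Acc else if tm_start M \<in> tm_rej M then Rej else Init)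
          (tm_start M) (tm_blank M) (tm_blank M) 0 True 0 0 False (tm_blank M) (tm_blank M) MStay"

definition FA :: "'a kfa" where
  "FA = \<lparr>fa_heads = c + 5, fa_states = to_nat ` CS, fa_start = to_nat x0,
         fa_acc = to_nat ` {x \<in> CS. ph x = Acc}, fa_rej = to_nat ` {x \<in> CS. ph x = Rej},
         fa_delta = (\<lambda>q sy. case act (from_nat q) sy of (x', d) \<Rightarrow> (to_nat x', d))\<rparr>"

lemma FA_simps[simp]: "fa_heads FA = c + 5" "fa_states FA = to_nat ` CS" "fa_start FA = to_nat x0"
  "fa_acc FA = to_nat ` {x \<in> CS. ph x = Acc}" "fa_rej FA = to_nat ` {x \<in> CS. ph x = Rej}"
  "fa_delta FA = (\<lambda>q sy. case act (from_nat q) sy of (x', d) \<Rightarrow> (to_nat x', d))"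
  by (simp_all add: FA_def)

lemma finite_phase: "finite (UNIV :: phase set)"
proof -
  have e: "UNIV = {Init, Rd1, Rd2, Rd3, Dec, Wr, Dbl, Hlv, Lx1, Lx2, Lx3, Acc, Rej}"
    by (auto intro: phase.exhaust)
  show ?thesis by (subst e) simp
qed

lemma finite_move: "finite (UNIV :: move set)"
proof -
  have e: "UNIV = {MLeft, MStay, MRight}" by (auto intro: move.exhaust)
  show ?thesis by (subst e) simp
qed

lemma finite_CS: "finite CS"
proof -
  let ?f = "\<lambda>(a, b, c, d, e, f, g, h, i, j, k, l). Ctl a b c d e f g h i j k l"
  have "CS \<subseteq> ?f ` (UNIV \<times> UNIV \<times> UNIV \<times> UNIV \<times> {..2} \<times> UNIV \<times> {..c} \<times> {..<2^c} \<times> UNIV \<times> UNIV \<times> UNIV \<times> UNIV)"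
  proof
    fix x assume "x \<in> CS"
    then show "x \<in> ?f ` (UNIV \<times> UNIV \<times> UNIV \<times> UNIV \<times> {..2} \<times> UNIV \<times> {..c} \<times> {..<2^c} \<times> UNIV \<times> UNIV \<times> UNIV \<times> UNIV)"
      by (cases x) (auto simp: CS_def image_iff)
  qed
  moreover have "finite (UNIV \<times> UNIV \<times> UNIV \<times> UNIV \<times> {..2::nat} \<times> (UNIV::bool set) \<times> {..c} \<times> {..<(2::nat)^c} \<times> (UNIV::bool set) \<times> (UNIV::'g set) \<times> (UNIV::'g set) \<times> (UNIV :: move set)
       :: (phase \<times> 's \<times> 'g \<times> 'g \<times> nat \<times> bool \<times> nat \<times> nat \<times> bool \<times> 'g \<times> 'g \<times> move) set)"
    using finite_phase finite_move by (intro finite_cartesian_product) auto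
  ultimately show ?thesis by (rule finite_subset[OF _ finite_imageI])
qed

lemma ready_CS: "x \<in> CS \<Longrightarrow> ready x \<in> CS"
  using c_pos by (simp add: CS_def ready_def)

lemma decide_CS: "x \<in> CS \<Longrightarrow> fst (decide x a g) \<in> CS"
  using c_pos by (auto simp: CS_def decide_def split: prod.splits move.splits)

lemma act_CS: "x \<in> CS \<Longrightarrow> fst (act x sy) \<in> CS"
proof (cases "ph x")
  case Rd3
  assume "x \<in> CS"
  then show ?thesis using Rd3 c_pos by (cases x) (auto simp: act_def Let_def CS_def)
next
  case Wr
  assume "x \<in> CS"
  then show ?thesis using Wr c_pos by (cases x) (auto simp: act_def Let_def CS_def ready_def split: move.splits)
qed (cases x; auto simp: act_def Let_def CS_def ready_def decide_CS[unfolded CS_def, simplified])+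

lemma x0_CS: "x0 \<in> CS"
  by (simp add: x0_def CS_def)

lemma FA_wf: "kfa_wf FA"
  unfolding kfa_wf_def
  using finite_CS x0_CS act_CS
  by (auto simp: split: prod.splits) (metis fst_conv imageI)+

end

context sim
begin

definition syms :: "'a list \<Rightarrow> (nat \<Rightarrow> int) \<Rightarrow> nat \<Rightarrow> 'a tsym" where
  "syms w p = (\<lambda>i. if i < c + 5 then tape_at w (p i) else LEnd)"

definition upd :: "(nat \<Rightarrow> int) \<Rightarrow> (nat \<Rightarrow> move) \<Rightarrow> nat \<Rightarrow> int" where
  "upd p d = (\<lambda>i. if i < c + 5 then p i + mv (d i) else 0)"

definition good :: "(nat \<Rightarrow> int) \<Rightarrow> bool" where
  "good p \<longleftrightarrow> (\<forall>i. c + 5 \<le> i \<longrightarrow> p i = 0)"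

definition okp :: "'a list \<Rightarrow> (nat \<Rightarrow> int) \<Rightarrow> bool" where
  "okp w p \<longleftrightarrow> (\<forall>i < c + 5. 0 \<le> p i \<and> p i \<le> int (length w) + 1)"

definition runs :: "'a list \<Rightarrow> fa_conf \<Rightarrow> nat \<Rightarrow> fa_conf \<Rightarrow> bool" where
  "runs w C n C' \<longleftrightarrow> (fa_step FA w ^^ n) C = C' \<and> (\<forall>j<n. \<not> fa_halted FA w ((fa_step FA w ^^ j) C))"

lemma fa_step_FA:
  "fa_step FA w (to_nat x, p) = (to_nat (fst (act x (syms w p))), upd p (snd (act x (syms w p))))"
  by (cases "act x (syms w p)") (simp add: fa_step_def syms_def upd_def)

lemma runs_0[simp]: "runs w C 0 C"
  by (simp add: runs_def)

lemma runs_trans: "runs w C a C' \<Longrightarrow> runs w C' b C'' \<Longrightarrow> runs w C (a + b) C''"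
proof -
  assume h1: "runs w C a C'" and h2: "runs w C' b C''"
  have e: "\<And>j. (fa_step FA w ^^ (a + j)) C = (fa_step FA w ^^ j) C'"
    using h1 unfolding runs_def by (subst add.commute) (simp add: funpow_add)
  have "\<not> fa_halted FA w ((fa_step FA w ^^ j) C)" if "j < a + b" for j
  proof (cases "j < a")
    case True then show ?thesis using h1 by (auto simp: runs_def)
  next
    case False
    then obtain j' where "j = a + j'" "j' < b" using \<open>j < a + b\<close> by (metis add_diff_inverse_nat nat_add_left_cancel_less)
    then show ?thesis using h2 e by (simp add: runs_def)
  qed
  then show ?thesis using e h2 by (simp add: runs_def)
qed

lemma not_halted:
  fixes x :: "('s, 'g) ctl"
  assumes "ph x \<noteq> Acc" "ph x \<noteq> Rej" "okp w p"
  shows "\<not> fa_halted FA w (to_nat x, p)"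
proof -
  have "to_nat x \<notin> fa_acc FA" "to_nat x \<notin> fa_rej FA"
    using assms(1,2) by (simp_all add: inj_image_mem_iff)
  then show ?thesis using assms(3) by (auto simp: fa_halted_def fa_heads_ok_def okp_def in_range_def)
qed

lemma runs_1:
  assumes "ph x \<noteq> Acc" "ph x \<noteq> Rej" "okp w p" "act x (syms w p) = (x', d)"
  shows "runs w (to_nat x, p) 1 (to_nat x', upd p d)"
  using assms not_halted[OF assms(1-3)] by (simp add: runs_def fa_step_FA)

lemma runs_path:
  assumes "\<And>q. q < n \<Longrightarrow> ph (X q) \<noteq> Acc \<and> ph (X q) \<noteq> Rej \<and> okp w (P q) \<and>
              act (X q) (syms w (P q)) = (X (Suc q), D q) \<and> upd (P q) (D q) = P (Suc q)"
  shows "runs w (to_nat (X 0), P 0) n (to_nat (X n), P n)"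
  using assms
proof (induction n)
  case 0 then show ?case by simp
next
  case (Suc n)
  then have "runs w (to_nat (X 0), P 0) n (to_nat (X n), P n)" by simp
  moreover have "runs w (to_nat (X n), P n) 1 (to_nat (X (Suc n)), P (Suc n))"
    using Suc.prems[of n] runs_1[of "X n" w "P n" "X (Suc n)" "D n"] by auto
  ultimately show ?case using runs_trans[of w _ n _ 1] by simp
qed

lemma upd_stay: "good p \<Longrightarrow> upd p stay = p"
  by (auto simp: upd_def stay_def good_def)

lemma upd_upd: "a < c + 5 \<Longrightarrow> upd p (d(a := m)) = (upd p d)(a := p a + mv m)"
  by (auto simp: upd_def)

lemma good_upd: "good (upd p d)"
  by (simp add: good_def upd_def)

lemma good_fun_upd: "good p \<Longrightarrow> a < c + 5 \<Longrightarrow> good (p(a := v))"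
  by (simp add: good_def)

lemma hidx[simp]: "hI < c + 5" "hF < c + 5" "hh b < c + 5" "hl b < c + 5" "k < c \<Longrightarrow> hT k < c + 5"
  by (auto simp: hdefs)

lemma hdist[simp]: "hI \<noteq> hF" "hF \<noteq> hI" "hI \<noteq> hh b" "hh b \<noteq> hI" "hI \<noteq> hl b" "hl b \<noteq> hI"
  "hF \<noteq> hh b" "hh b \<noteq> hF" "hF \<noteq> hl b" "hl b \<noteq> hF" "hh b \<noteq> hl b" "hl b \<noteq> hh b"
  "hT k \<noteq> hI" "hI \<noteq> hT k" "hT k \<noteq> hF" "hF \<noteq> hT k" "hT k \<noteq> hh b" "hh b \<noteq> hT k"
  "hT k \<noteq> hl b" "hl b \<noteq> hT k" "(hT k = hT k') = (k = k')"
  "hh (\<not> b) = hl b" "hl (\<not> b) = hh b"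
  by (auto simp: hdefs)

lemma tape_LEnd: "(tape_at w x = LEnd) = (x \<le> 0)"
  by (simp add: tape_at_def)

lemma syms_LEnd: "h < c + 5 \<Longrightarrow> (syms w p h = LEnd) = (p h \<le> 0)"
  by (simp add: syms_def tape_LEnd)

lemma syms_hI: "syms w p hI = tape_at w (p hI)"
  by (simp add: syms_def hdefs)

lemma mv_simps[simp]: "mv MLeft = -1" "mv MStay = 0" "mv MRight = 1"
  by simp_all

end

context sim
begin

lemma okp_upd: "okp w p \<Longrightarrow> 0 \<le> v \<Longrightarrow> v \<le> int (length w) + 1 \<Longrightarrow> okp w (p(h := v))"
  by (simp add: okp_def)

lemma okpD: "okp w p \<Longrightarrow> h < c + 5 \<Longrightarrow> 0 \<le> p h \<and> p h \<le> int (length w) + 1"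
  by (simp add: okp_def)

lemma rd2:
  fixes q :: 's and a b ga gb :: 'g
  assumes "good p" "okp w p" "k < c" "p hF = f" "p (hT k) = t" "t + f \<le> int (length w) + 1"
  shows "runs w (to_nat (Ctl Rd2 q a b l ov k cdv ee ga gb dr), p) (nat f + 1)
                (to_nat (Ctl Rd3 q a b l ov k cdv ee ga gb dr), p(hF := 0, hT k := t + f))"
proof -
  let ?x = "Ctl Rd2 q a b l ov k cdv ee ga gb dr"
  have f0: "0 \<le> f" "0 \<le> t" using okpD[OF assms(2), of hF] okpD[OF assms(2), of "hT k"] assms by auto
  define P where "P j = p(hF := f - int j, hT k := t + int j)" for j
  have "ph ?x \<noteq> Acc \<and> ph ?x \<noteq> Rej \<and> okp w (P j) \<and>
      act ?x (syms w (P j)) = (?x, stay(hF := MLeft, hT k := MRight)) \<and>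
      upd (P j) (stay(hF := MLeft, hT k := MRight)) = P (Suc j)" if j: "j < nat f" for j
  proof -
    have ok: "okp w (P j)" unfolding P_def using assms f0 j by (intro okp_upd) auto
    have gd: "good (P j)" unfolding P_def using assms by (intro good_fun_upd) auto
    have "act ?x (syms w (P j)) = (?x, stay(hF := MLeft, hT k := MRight))"
      using j assms by (simp add: act_def Let_def syms_LEnd P_def)
    moreover have "upd (P j) (stay(hF := MLeft, hT k := MRight)) = P (Suc j)"
      using gd assms by (simp add: upd_upd upd_stay P_def fun_upd_twist algebra_simps)
    ultimately show ?thesis using ok by simp
  qed
  then have "runs w (to_nat ?x, P 0) (nat f) (to_nat ?x, P (nat f))"
    using runs_path[where X="\<lambda>_. ?x" and P=P and n="nat f" and D="\<lambda>_. stay(hF := MLeft, hT k := MRight)"] by blast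
  moreover have "runs w (to_nat ?x, P (nat f)) 1 (to_nat (Ctl Rd3 q a b l ov k cdv ee ga gb dr), P (nat f))"
  proof -
    have ok: "okp w (P (nat f))" unfolding P_def using assms f0 by (intro okp_upd) auto
    have gd: "good (P (nat f))" unfolding P_def using assms by (intro good_fun_upd) auto
    have "act ?x (syms w (P (nat f))) = (Ctl Rd3 q a b l ov k cdv ee ga gb dr, stay)"
      using assms f0 by (simp add: act_def Let_def syms_LEnd P_def)
    then have "runs w (to_nat ?x, P (nat f)) 1 (to_nat (Ctl Rd3 q a b l ov k cdv ee ga gb dr), upd (P (nat f)) stay)"
      by (intro runs_1 ok) simp_all
    then show ?thesis using upd_stay[OF gd] by simp
  qed
  ultimately have "runs w (to_nat ?x, P 0) (nat f + 1) (to_nat (Ctl Rd3 q a b l ov k cdv ee ga gb dr), P (nat f))"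
    using runs_trans by fastforce
  moreover have "P 0 = p" using assms by (auto simp: P_def)
  moreover have "P (nat f) = p(hF := 0, hT k := t + f)" using f0 by (simp add: P_def)
  ultimately show ?thesis by simp
qed

lemma zz_step:
  fixes j H :: nat
  assumes "0 < H"
  shows "Suc j mod H = 0 \<Longrightarrow> Suc (j div H) = Suc j div H \<and> j mod H = H - 1"
    and "Suc j mod H \<noteq> 0 \<Longrightarrow> j div H = Suc j div H \<and> Suc (j mod H) = Suc j mod H"
  using assms
  by (auto simp: div_Suc mod_Suc split: if_splits)

lemma rd1:
  fixes q :: 's and a b ga gb :: 'g and v H :: nat and ov ee :: bool
  assumes "good p" "okp w p" "k < c" "p hF = 0" "p (hT k) = int v" "p (hh ov) = int H" "p (hl ov) = 0"
    "0 < H" "int v \<le> int (length w) + 1" "int H \<le> int (length w) + 1"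
  defines "ov' \<equiv> (ov \<noteq> odd (v div H))" and "ee' \<equiv> (ee \<noteq> odd (v div H))"
  shows "runs w (to_nat (Ctl Rd1 q a b 2 ov k cdv ee ga gb dr), p) (v + 1)
                (to_nat (Ctl Rd2 q a b 2 ov' k cdv ee' ga gb dr),
                 p(hT k := 0, hF := int v, hh ov' := int (H - v mod H), hl ov' := int (v mod H)))"
proof -
  define fl where "fl j = (if j = 0 then 0 else (j - 1) div H)" for j :: nat
  define hp where "hp j = (if j = 0 then H else H - ((j - 1) mod H + 1))" for j :: nat
  define Or where "Or j = (ov \<noteq> odd (fl j))" for j
  define Ep where "Ep j = (ee \<noteq> odd (fl j))" for j
  define X where "X j = Ctl Rd1 q a b 2 (Or j) k cdv (Ep j) ga gb dr" for j
  define P where "P j = p(hT k := int v - int j, hF := int j, hh (Or j) := int (hp j),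
                       hl (Or j) := int H - int (hp j))" for j
  define D where "D j = (if hp j = 0 then stay(hT k := MLeft, hF := MRight, hh (\<not> Or j) := MLeft, hl (\<not> Or j) := MRight)
                        else stay(hT k := MLeft, hF := MRight, hh (Or j) := MLeft, hl (Or j) := MRight))" for j
  have hpH: "hp j \<le> H" for j by (simp add: hp_def)
  have gdP: "good (P j)" for j unfolding P_def using assms by (intro good_fun_upd) auto
  have okP: "okp w (P j)" if "j \<le> v" for j unfolding P_def using assms that hpH[of j]
    by (intro okp_upd) auto
  have hp0: "(hp j = 0) = (0 < j \<and> j mod H = 0)" for j
  proof (cases j)
    case (Suc j')
    have "j' mod H < H" using assms(8) by simp
    then show ?thesis using Suc by (auto simp: hp_def mod_Suc)
  qed (use assms(8) in \<open>simp add: hp_def\<close>)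
  have stepj: "ph (X j) \<noteq> Acc \<and> ph (X j) \<noteq> Rej \<and> okp w (P j) \<and>
      act (X j) (syms w (P j)) = (X (Suc j), D j) \<and> upd (P j) (D j) = P (Suc j)" if j: "j < v" for j
  proof -
    have A: "act (X j) (syms w (P j)) = (if hp j = 0 then Ctl Rd1 q a b 2 (\<not> Or j) k cdv (\<not> Ep j) ga gb dr else X j, D j)"
      using j assms by (simp add: act_def Let_def syms_LEnd P_def X_def D_def)
    show ?thesis
    proof (cases "hp j = 0")
      case True
      then have j0: "0 < j" "j mod H = 0" using hp0 by auto
      obtain j' where j': "j = Suc j'" using j0 by (cases j) auto
      have z: "Suc (j' div H) = j div H" "j' mod H = H - 1" using zz_step(1)[OF assms(8), of j'] j0 j' by auto
      have fl1: "fl (Suc j) = Suc (fl j)" "hp (Suc j) = H - 1"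
        using z j' j0 by (simp_all add: fl_def hp_def)
      have OS: "Or (Suc j) = (\<not> Or j)" "Ep (Suc j) = (\<not> Ep j)" using fl1 by (auto simp: Or_def Ep_def)
      have "X (Suc j) = Ctl Rd1 q a b 2 (\<not> Or j) k cdv (\<not> Ep j) ga gb dr"
        using OS by (simp add: X_def)
      moreover have "upd (P j) (D j) = P (Suc j)"
        using True fl1 OS gdP[of j] assms(3,8) by (auto simp: D_def P_def upd_upd upd_stay algebra_simps intro!: ext)
      ultimately show ?thesis using A True okP[of j] j by (simp add: X_def)
    next
      case False
      have fl1: "fl (Suc j) = fl j" "int (hp (Suc j)) = int (hp j) - 1"
      proof -
        show "fl (Suc j) = fl j"
        proof (cases j)
          case (Suc j')
          then show ?thesis using False hp0 zz_step(2)[OF assms(8), of j'] by (simp add: fl_def)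
        qed (simp add: fl_def)
        show "int (hp (Suc j)) = int (hp j) - 1"
        proof (cases j)
          case 0 then show ?thesis using assms(8) by (simp add: hp_def)
        next
          case (Suc j')
          then have "j mod H \<noteq> 0" using False hp0 by auto
          then have "Suc (j' mod H) = j mod H" using zz_step(2)[OF assms(8), of j'] Suc by auto
          moreover have "j mod H < H" using assms(8) by simp
          ultimately show ?thesis using Suc by (simp add: hp_def)
        qed
      qed
      have OS: "Or (Suc j) = Or j" using fl1 by (simp add: Or_def)
      have "upd (P j) (D j) = P (Suc j)"
        using False fl1 OS gdP[of j] assms(3,8) hpH[of j]
        by (auto simp: D_def P_def upd_upd upd_stay algebra_simps intro!: ext)
      then show ?thesis using A False okP[of j] j fl1 by (simp add: X_def Or_def Ep_def)
    qed
  qed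
  have R1: "runs w (to_nat (X 0), P 0) v (to_nat (X v), P v)"
    using runs_path[where X=X and P=P and D=D and n=v] stepj by blast
  have "v div H = fl v + (if hp v = 0 then 1 else 0)"
    using hp0[of v] zz_step[OF assms(8), of "v - 1"] by (cases v) (auto simp: fl_def)
  then have oddeq: "odd (v div H) = (odd (fl v) \<noteq> (hp v = 0))" by auto
  have vm: "(if hp v = 0 then 0 else int H - int (hp v)) = int (v mod H)"
  proof (cases v)
    case 0 then show ?thesis by (simp add: hp_def)
  next
    case (Suc v')
    show ?thesis
    proof (cases "hp v = 0")
      case True then show ?thesis using hp0 by auto
    next
      case False
      then have "v mod H \<noteq> 0" using hp0 Suc by auto
      then have "Suc (v' mod H) = v mod H" using zz_step(2)[OF assms(8), of v'] Suc by auto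
      moreover have "v mod H < H" using assms(8) by simp
      ultimately show ?thesis using Suc False by (simp add: hp_def)
    qed
  qed
  have R2: "runs w (to_nat (X v), P v) 1 (to_nat (Ctl Rd2 q a b 2 ov' k cdv ee' ga gb dr),
               p(hT k := 0, hF := int v, hh ov' := int (H - v mod H), hl ov' := int (v mod H)))"
  proof -
    have "act (X v) (syms w (P v)) = (Ctl Rd2 q a b 2 ov' k cdv ee' ga gb dr, stay)"
      using assms oddeq by (auto simp: act_def Let_def syms_LEnd P_def X_def ov'_def ee'_def Or_def Ep_def)
    then have "runs w (to_nat (X v), P v) 1 (to_nat (Ctl Rd2 q a b 2 ov' k cdv ee' ga gb dr), upd (P v) stay)"
      by (intro runs_1 okP) (simp_all add: X_def)
    moreover have "upd (P v) stay = p(hT k := 0, hF := int v, hh ov' := int (H - v mod H), hl ov' := int (v mod H))"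
    proof (cases "hp v = 0")
      case True
      have e1: "ov' = (\<not> Or v)" using oddeq True by (auto simp: ov'_def Or_def)
      show ?thesis unfolding e1 using upd_stay[OF gdP[of v]] assms(1-11) True vm by (auto simp: P_def intro!: ext)
    next
      case False
      have e1: "ov' = Or v" using oddeq False by (auto simp: ov'_def Or_def)
      show ?thesis unfolding e1 using upd_stay[OF gdP[of v]] assms(1-11) False vm hpH[of v] by (auto simp: P_def intro!: ext)
    qed
    ultimately show ?thesis by simp
  qed
  have "X 0 = Ctl Rd1 q a b 2 ov k cdv ee ga gb dr" by (simp add: X_def fl_def Or_def Ep_def)
  moreover have "P 0 = p" using assms by (auto simp: P_def fl_def hp_def Or_def intro!: ext)
  ultimately show ?thesis using runs_trans[OF R1 R2] by simp
qed

end

context sim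
begin

lemma act_Rd3: "act (Ctl Rd3 q a b l ov k cdv ee ga gb dr) sy =
  (if sy (hl ov) = LEnd then
     (if Suc k < c then (Ctl Rd1 q a b l ov (Suc k) ((cdv + (if ee then 2 ^ k else 0)) mod 2 ^ c) False ga gb dr, stay)
      else (Ctl Dec q a b l ov 0 ((cdv + (if ee then 2 ^ k else 0)) mod 2 ^ c) False ga gb dr, stay))
   else (Ctl Rd3 q a b l ov k cdv ee ga gb dr, stay(hl ov := MLeft, hh ov := MRight)))"
  by (simp add: act_def Let_def)

lemma act_Wr: "act (Ctl Wr q a b l ov k cdv ee ga gb dr) sy =
  (if c \<le> k then
     (case dr of MStay \<Rightarrow> (Ctl Rd1 q a b l ov 0 0 False ga gb dr, stay)
      | MRight \<Rightarrow> (Ctl Dbl q a b l ov k cdv False ga gb dr, stay)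
      | MLeft \<Rightarrow> (Ctl Hlv q a b l ov k cdv False ga gb dr, stay))
   else if bitk ga k = bitk gb k then (Ctl Wr q a b l ov (Suc k) cdv ee ga gb dr, stay)
   else if sy (hh ov) = LEnd then (Ctl Wr q a b l (\<not> ov) (Suc k) cdv ee ga gb dr, stay)
   else (Ctl Wr q a b l ov k cdv ee ga gb dr, stay(hT k := (if bitk gb k then MRight else MLeft), hh ov := MLeft, hl ov := MRight)))"
  by (cases dr) (simp_all add: act_def Let_def ready_def)

lemma act_Dbl: "act (Ctl Dbl q a b l ov k cdv ee ga gb dr) sy =
  (if sy (hh ov) = LEnd \<and> \<not> ee then (Ctl Rd1 q a b l (\<not> ov) 0 0 False ga gb dr, stay)
   else if \<not> ee then (Ctl Dbl q a b l ov k cdv True ga gb dr, stay(hh ov := MLeft, hl ov := MRight))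
   else (Ctl Dbl q a b l ov k cdv False ga gb dr, stay(hl ov := MRight)))"
  by (simp add: act_def Let_def ready_def)

lemma act_Hlv: "act (Ctl Hlv q a b l ov k cdv ee ga gb dr) sy =
  (if sy (hh ov) = LEnd then
     (if sy (hl ov) = LEnd then (Ctl Rd1 q a b 1 ov 0 0 False ga gb dr, stay(hh ov := MRight))
      else (Ctl Rd1 q a b l (\<not> ov) 0 0 False ga gb dr, stay))
   else (Ctl Hlv q a b l ov k cdv (\<not> ee) ga gb dr, stay(hh ov := MLeft, hl ov := (if ee then MRight else MStay))))"
  by (simp add: act_def Let_def ready_def)

lemma act_Lx1: "act (Ctl Lx1 q a b l ov k cdv ee ga gb dr) sy =
  (if sy (hT k) = LEnd \<and> \<not> ee then (Ctl Lx2 q a b l ov k cdv ee ga gb dr, stay)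
   else if \<not> ee then (Ctl Lx1 q a b l ov k cdv True ga gb dr, stay(hT k := MLeft, hF := MRight))
   else (Ctl Lx1 q a b l ov k cdv False ga gb dr, stay(hF := MRight)))"
  by (simp add: act_def Let_def)

lemma act_Lx2: "act (Ctl Lx2 q a b l ov k cdv ee ga gb dr) sy =
  (Ctl Lx3 q a b l ov k cdv ee ga gb dr, stay(hF := (if bitk ga k then MRight else MStay)))"
  by (simp add: act_def Let_def)

lemma act_Lx3: "act (Ctl Lx3 q a b l ov k cdv ee ga gb dr) sy =
  (if sy hF = LEnd then
     (if Suc k < c then (Ctl Lx1 q a b l ov (Suc k) cdv False ga gb dr, stay)
      else (Ctl Rd1 q a b l ov 0 0 False ga gb dr, stay))
   else (Ctl Lx3 q a b l ov k cdv ee ga gb dr, stay(hF := MLeft, hT k := MRight)))"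
  by (simp add: act_def Let_def ready_def)

lemma act_Init: "act (Ctl Init q a b l ov k cdv ee ga gb dr) sy =
  (Ctl Rd1 q a b l ov 0 0 False ga gb dr, stay(hh ov := MRight))"
  by (simp add: act_def Let_def ready_def)

lemma rd3:
  fixes q :: 's and a b ga gb :: 'g and r H :: nat and ov ee :: bool and k cdv :: nat
  assumes "good p" "okp w p" "p (hl ov) = int r" "p (hh ov) = int H - int r" "r \<le> H"
    "int H \<le> int (length w) + 1"
  defines "cd' \<equiv> (cdv + (if ee then 2 ^ k else 0)) mod 2 ^ c"
  shows "runs w (to_nat (Ctl Rd3 q a b l ov k cdv ee ga gb dr), p) (r + 1)
                (to_nat (if Suc k < c then Ctl Rd1 q a b l ov (Suc k) cd' False ga gb dr
                         else Ctl Dec q a b l ov 0 cd' False ga gb dr), p(hl ov := 0, hh ov := int H))"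
proof -
  let ?x = "Ctl Rd3 q a b l ov k cdv ee ga gb dr"
  define P where "P j = p(hl ov := int r - int j, hh ov := int H - int r + int j)" for j
  have gd: "good (P j)" for j unfolding P_def using assms by (intro good_fun_upd) auto
  have ok: "okp w (P j)" if "j \<le> r" for j unfolding P_def using assms that by (intro okp_upd) auto
  have "ph ?x \<noteq> Acc \<and> ph ?x \<noteq> Rej \<and> okp w (P j) \<and>
      act ?x (syms w (P j)) = (?x, stay(hl ov := MLeft, hh ov := MRight)) \<and>
      upd (P j) (stay(hl ov := MLeft, hh ov := MRight)) = P (Suc j)" if j: "j < r" for j
  proof -
    have s1: "syms w (P j) (hl ov) \<noteq> LEnd" using j by (simp add: syms_LEnd P_def)
    have "act ?x (syms w (P j)) = (?x, stay(hl ov := MLeft, hh ov := MRight))"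
      using s1 by (simp only: act_Rd3 if_False)
    moreover have "upd (P j) (stay(hl ov := MLeft, hh ov := MRight)) = P (Suc j)"
      using gd[of j] by (simp add: P_def upd_upd upd_stay algebra_simps)
    ultimately show ?thesis using ok[of j] j by simp
  qed
  then have R1: "runs w (to_nat ?x, P 0) r (to_nat ?x, P r)"
    using runs_path[where X="\<lambda>_. ?x" and P=P and n=r and D="\<lambda>_. stay(hl ov := MLeft, hh ov := MRight)"] by blast
  have s1: "syms w (P r) (hl ov) = LEnd" by (simp add: syms_LEnd P_def)
  have "act ?x (syms w (P r)) = (if Suc k < c then Ctl Rd1 q a b l ov (Suc k) cd' False ga gb dr
                         else Ctl Dec q a b l ov 0 cd' False ga gb dr, stay)"
    using s1 by (simp add: act_Rd3 cd'_def)
  then have R2: "runs w (to_nat ?x, P r) 1 (to_nat (if Suc k < c then Ctl Rd1 q a b l ov (Suc k) cd' False ga gb dr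
                         else Ctl Dec q a b l ov 0 cd' False ga gb dr), upd (P r) stay)"
    by (intro runs_1 ok) simp_all
  have "P 0 = p" using assms by (auto simp: P_def)
  moreover have "upd (P r) stay = p(hl ov := 0, hh ov := int H)" using upd_stay[OF gd[of r]] by (simp add: P_def)
  ultimately show ?thesis using runs_trans[OF R1 R2] by simp
qed

lemma wr_same:
  fixes q :: 's and a b ga gb :: 'g and ov ee :: bool
  assumes "good p" "okp w p" "k < c" "bitk ga k = bitk gb k"
  shows "runs w (to_nat (Ctl Wr q a b l ov k cdv ee ga gb dr), p) 1
                (to_nat (Ctl Wr q a b l ov (Suc k) cdv ee ga gb dr), p)"
proof -
  have "act (Ctl Wr q a b l ov k cdv ee ga gb dr) (syms w p) = (Ctl Wr q a b l ov (Suc k) cdv ee ga gb dr, stay)"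
    using assms by (simp add: act_Wr)
  then have "runs w (to_nat (Ctl Wr q a b l ov k cdv ee ga gb dr), p) 1 (to_nat (Ctl Wr q a b l ov (Suc k) cdv ee ga gb dr), upd p stay)"
    by (intro runs_1 assms) simp_all
  then show ?thesis using upd_stay[OF assms(1)] by simp
qed

lemma wr_diff:
  fixes q :: 's and a b ga gb :: 'g and ov ee :: bool and H :: nat and v :: int
  assumes "good p" "okp w p" "k < c" "bitk ga k \<noteq> bitk gb k"
    "p (hh ov) = int H" "p (hl ov) = 0" "p (hT k) = v" "0 < H"
    "int H \<le> int (length w) + 1"
    "0 \<le> v + (if bitk gb k then int H else - int H)" "v + (if bitk gb k then int H else - int H) \<le> int (length w) + 1"
  shows "runs w (to_nat (Ctl Wr q a b l ov k cdv ee ga gb dr), p) (H + 1)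
                (to_nat (Ctl Wr q a b l (\<not> ov) (Suc k) cdv ee ga gb dr),
                 p(hh ov := 0, hl ov := int H, hT k := v + (if bitk gb k then int H else - int H)))"
proof -
  let ?x = "Ctl Wr q a b l ov k cdv ee ga gb dr"
  let ?s = "if bitk gb k then 1 else (-1::int)"
  let ?d = "stay(hT k := (if bitk gb k then MRight else MLeft), hh ov := MLeft, hl ov := MRight)"
  define P where "P j = p(hT k := v + ?s * int j, hh ov := int H - int j, hl ov := int j)" for j
  have gd: "good (P j)" for j unfolding P_def using assms by (intro good_fun_upd) auto
  have ok: "okp w (P j)" if "j \<le> H" for j
  proof -
    have "0 \<le> v" "v \<le> int (length w) + 1" using okpD[OF assms(2), of "hT k"] assms by auto
    then have "0 \<le> v + ?s * int j \<and> v + ?s * int j \<le> int (length w) + 1"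
      using assms(10,11) that by (cases "bitk gb k") auto
    then show ?thesis unfolding P_def using assms that by (intro okp_upd) auto
  qed
  have "ph ?x \<noteq> Acc \<and> ph ?x \<noteq> Rej \<and> okp w (P j) \<and>
      act ?x (syms w (P j)) = (?x, ?d) \<and> upd (P j) ?d = P (Suc j)" if j: "j < H" for j
    using j ok[of j] gd[of j] assms
    by (cases "bitk gb k") (simp_all add: act_Wr syms_LEnd P_def upd_upd upd_stay algebra_simps)
  then have R1: "runs w (to_nat ?x, P 0) H (to_nat ?x, P H)"
    using runs_path[where X="\<lambda>_. ?x" and P=P and n=H and D="\<lambda>_. ?d"] by blast
  have "act ?x (syms w (P H)) = (Ctl Wr q a b l (\<not> ov) (Suc k) cdv ee ga gb dr, stay)"
    using assms by (simp add: act_Wr syms_LEnd P_def)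
  then have R2: "runs w (to_nat ?x, P H) 1 (to_nat (Ctl Wr q a b l (\<not> ov) (Suc k) cdv ee ga gb dr), upd (P H) stay)"
    by (intro runs_1 ok) simp_all
  have "P 0 = p" using assms by (auto simp: P_def)
  moreover have "upd (P H) stay = p(hh ov := 0, hl ov := int H, hT k := v + (if bitk gb k then int H else - int H))"
    using upd_stay[OF gd[of H]] by (auto simp: P_def intro!: ext)
  ultimately show ?thesis using runs_trans[OF R1 R2] by simp
qed

lemma wr_disp:
  fixes q :: 's and a b ga gb :: 'g and ov ee :: bool
  assumes "good p" "okp w p" "c \<le> k"
  shows "runs w (to_nat (Ctl Wr q a b l ov k cdv ee ga gb dr), p) 1
                (to_nat (case dr of MStay \<Rightarrow> Ctl Rd1 q a b l ov 0 0 False ga gb dr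
                   | MRight \<Rightarrow> Ctl Dbl q a b l ov k cdv False ga gb dr
                   | MLeft \<Rightarrow> Ctl Hlv q a b l ov k cdv False ga gb dr), p)"
proof -
  have "act (Ctl Wr q a b l ov k cdv ee ga gb dr) (syms w p) = (case dr of MStay \<Rightarrow> Ctl Rd1 q a b l ov 0 0 False ga gb dr
                   | MRight \<Rightarrow> Ctl Dbl q a b l ov k cdv False ga gb dr
                   | MLeft \<Rightarrow> Ctl Hlv q a b l ov k cdv False ga gb dr, stay)"
    using assms by (cases dr) (simp_all add: act_Wr)
  then have "runs w (to_nat (Ctl Wr q a b l ov k cdv ee ga gb dr), p) 1 (to_nat (case dr of MStay \<Rightarrow> Ctl Rd1 q a b l ov 0 0 False ga gb dr
                   | MRight \<Rightarrow> Ctl Dbl q a b l ov k cdv False ga gb dr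
                   | MLeft \<Rightarrow> Ctl Hlv q a b l ov k cdv False ga gb dr), upd p stay)"
    by (intro runs_1 assms) simp_all
  then show ?thesis using upd_stay[OF assms(1)] by simp
qed

lemma dbl:
  fixes q :: 's and a b ga gb :: 'g and ov :: bool and H :: nat
  assumes "good p" "okp w p" "p (hh ov) = int H" "p (hl ov) = 0" "0 < H" "2 * int H \<le> int (length w) + 1"
  shows "runs w (to_nat (Ctl Dbl q a b l ov k cdv False ga gb dr), p) (2 * H + 1)
                (to_nat (Ctl Rd1 q a b l (\<not> ov) 0 0 False ga gb dr), p(hh ov := 0, hl ov := 2 * int H))"
proof -
  define X where "X j = Ctl Dbl q a b l ov k cdv (odd j) ga gb dr" for j :: nat
  define P where "P j = p(hh ov := int H - int ((j + 1) div 2), hl ov := int j)" for j :: nat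
  define D where "D j = (if odd j then stay(hl ov := MRight) else stay(hh ov := MLeft, hl ov := MRight))" for j :: nat
  have gd: "good (P j)" for j unfolding P_def using assms by (intro good_fun_upd) auto
  have ok: "okp w (P j)" if "j \<le> 2 * H" for j unfolding P_def using assms that by (intro okp_upd) auto
  have "ph (X j) \<noteq> Acc \<and> ph (X j) \<noteq> Rej \<and> okp w (P j) \<and>
      act (X j) (syms w (P j)) = (X (Suc j), D j) \<and> upd (P j) (D j) = P (Suc j)" if j: "j < 2 * H" for j
  proof (cases "odd j")
    case True
    then have e: "(Suc j + 1) div 2 = (j + 1) div 2" by presburger
    have "act (X j) (syms w (P j)) = (X (Suc j), D j)" using True by (simp add: act_Dbl X_def D_def)
    moreover have "upd (P j) (D j) = P (Suc j)" using gd[of j] True e by (simp add: P_def D_def upd_upd upd_stay algebra_simps)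
    ultimately show ?thesis using ok[of j] j by (simp add: X_def)
  next
    case False
    then have e: "(Suc j + 1) div 2 = Suc ((j + 1) div 2)" "(j + 1) div 2 < H" using j by presburger+
    have s1: "syms w (P j) (hh ov) \<noteq> LEnd" using e by (simp add: syms_LEnd P_def)
    have "act (X j) (syms w (P j)) = (X (Suc j), D j)" using False s1 by (simp add: act_Dbl X_def D_def)
    moreover have "upd (P j) (D j) = P (Suc j)" using gd[of j] False e by (simp add: P_def D_def upd_upd upd_stay algebra_simps)
    ultimately show ?thesis using ok[of j] j by (simp add: X_def)
  qed
  then have R1: "runs w (to_nat (X 0), P 0) (2 * H) (to_nat (X (2 * H)), P (2 * H))"
    using runs_path[where X=X and P=P and n="2 * H" and D=D] by blast
  have e2: "(2 * H + 1) div 2 = H" by presburger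
  have s1: "syms w (P (2 * H)) (hh ov) = LEnd" using e2 by (simp add: syms_LEnd P_def)
  have "act (X (2 * H)) (syms w (P (2 * H))) = (Ctl Rd1 q a b l (\<not> ov) 0 0 False ga gb dr, stay)"
    using s1 by (simp add: act_Dbl X_def)
  then have R2: "runs w (to_nat (X (2 * H)), P (2 * H)) 1 (to_nat (Ctl Rd1 q a b l (\<not> ov) 0 0 False ga gb dr), upd (P (2 * H)) stay)"
    by (intro runs_1 ok) (simp_all add: X_def)
  have "P 0 = p" "X 0 = Ctl Dbl q a b l ov k cdv False ga gb dr" using assms by (auto simp: P_def X_def)
  moreover have "upd (P (2 * H)) stay = p(hh ov := 0, hl ov := 2 * int H)" using upd_stay[OF gd[of "2 * H"]] e2 by (simp add: P_def)
  ultimately show ?thesis using runs_trans[OF R1 R2] by simp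
qed

lemma hlv:
  fixes q :: 's and a b ga gb :: 'g and ov :: bool and H :: nat
  assumes "good p" "okp w p" "p (hh ov) = int H" "p (hl ov) = 0" "0 < H" "H = 1 \<or> even H"
  shows "runs w (to_nat (Ctl Hlv q a b l ov k cdv False ga gb dr), p) (H + 1)
                (if H = 1 then (to_nat (Ctl Rd1 q a b 1 ov 0 0 False ga gb dr), p)
                 else (to_nat (Ctl Rd1 q a b l (\<not> ov) 0 0 False ga gb dr), p(hh ov := 0, hl ov := int (H div 2))))"
proof -
  define X where "X j = Ctl Hlv q a b l ov k cdv (odd j) ga gb dr" for j :: nat
  define P where "P j = p(hh ov := int H - int j, hl ov := int (j div 2))" for j :: nat
  define D where "D j = stay(hh ov := MLeft, hl ov := (if odd j then MRight else MStay))" for j :: nat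
  have gd: "good (P j)" for j unfolding P_def using assms by (intro good_fun_upd) auto
  have Hb: "int H \<le> int (length w) + 1" using okpD[OF assms(2), of "hh ov"] assms by simp
  have ok: "okp w (P j)" if "j \<le> H" for j unfolding P_def using assms that Hb by (intro okp_upd) auto
  have "ph (X j) \<noteq> Acc \<and> ph (X j) \<noteq> Rej \<and> okp w (P j) \<and>
      act (X j) (syms w (P j)) = (X (Suc j), D j) \<and> upd (P j) (D j) = P (Suc j)" if j: "j < H" for j
  proof -
    have s1: "syms w (P j) (hh ov) \<noteq> LEnd" using j by (simp add: syms_LEnd P_def)
    have "act (X j) (syms w (P j)) = (X (Suc j), D j)" using s1 by (simp add: act_Hlv X_def D_def)
    moreover have "upd (P j) (D j) = P (Suc j)"
    proof (cases "odd j")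
      case True
      then have "Suc j div 2 = Suc (j div 2)" by presburger
      then show ?thesis using gd[of j] True by (simp add: P_def D_def upd_upd upd_stay algebra_simps)
    next
      case False
      then have "Suc j div 2 = j div 2" by presburger
      then show ?thesis using gd[of j] False by (simp add: P_def D_def upd_upd upd_stay algebra_simps)
    qed
    ultimately show ?thesis using ok[of j] j by (simp add: X_def)
  qed
  then have R1: "runs w (to_nat (X 0), P 0) H (to_nat (X H), P H)"
    using runs_path[where X=X and P=P and n=H and D=D] by blast
  have P0: "P 0 = p" "X 0 = Ctl Hlv q a b l ov k cdv False ga gb dr" using assms by (auto simp: P_def X_def)
  show ?thesis
  proof (cases "H = 1")
    case True
    have s1: "syms w (P H) (hh ov) = LEnd" "syms w (P H) (hl ov) = LEnd" using True by (simp_all add: syms_LEnd P_def)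
    have "act (X H) (syms w (P H)) = (Ctl Rd1 q a b 1 ov 0 0 False ga gb dr, stay(hh ov := MRight))"
      using s1 by (simp add: act_Hlv X_def)
    then have R2: "runs w (to_nat (X H), P H) 1 (to_nat (Ctl Rd1 q a b 1 ov 0 0 False ga gb dr), upd (P H) (stay(hh ov := MRight)))"
      by (intro runs_1 ok) (simp_all add: X_def)
    moreover have "upd (P H) (stay(hh ov := MRight)) = p" using upd_stay[OF gd[of H]] True assms(3,4) by (auto simp: P_def upd_upd intro!: ext)
    ultimately show ?thesis using runs_trans[OF R1 R2] True P0 by simp
  next
    case False
    then have "2 \<le> H" "even H" using assms by auto
    then have "0 < H div 2" by auto
    then have s1: "syms w (P H) (hh ov) = LEnd" "syms w (P H) (hl ov) \<noteq> LEnd" by (simp_all add: syms_LEnd P_def)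
    then have "act (X H) (syms w (P H)) = (Ctl Rd1 q a b l (\<not> ov) 0 0 False ga gb dr, stay)"
      by (simp add: act_Hlv X_def)
    then have R2: "runs w (to_nat (X H), P H) 1 (to_nat (Ctl Rd1 q a b l (\<not> ov) 0 0 False ga gb dr), upd (P H) stay)"
      by (intro runs_1 ok) (simp_all add: X_def)
    moreover have "upd (P H) stay = p(hh ov := 0, hl ov := int (H div 2))" using upd_stay[OF gd[of H]] by (simp add: P_def)
    ultimately show ?thesis using runs_trans[OF R1 R2] False P0 by simp
  qed
qed

lemma lx1:
  fixes q :: 's and a b ga gb :: 'g and ov :: bool and v :: nat
  assumes "good p" "okp w p" "k < c" "p (hT k) = int v" "p hF = 0" "2 * int v \<le> int (length w) + 1"
  shows "runs w (to_nat (Ctl Lx1 q a b l ov k cdv False ga gb dr), p) (2 * v + 1)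
                (to_nat (Ctl Lx2 q a b l ov k cdv False ga gb dr), p(hT k := 0, hF := 2 * int v))"
proof -
  define X where "X j = Ctl Lx1 q a b l ov k cdv (odd j) ga gb dr" for j :: nat
  define P where "P j = p(hT k := int v - int ((j + 1) div 2), hF := int j)" for j :: nat
  define D where "D j = (if odd j then stay(hF := MRight) else stay(hT k := MLeft, hF := MRight))" for j :: nat
  have gd: "good (P j)" for j unfolding P_def using assms by (intro good_fun_upd) auto
  have ok: "okp w (P j)" if "j \<le> 2 * v" for j unfolding P_def using assms that by (intro okp_upd) auto
  have "ph (X j) \<noteq> Acc \<and> ph (X j) \<noteq> Rej \<and> okp w (P j) \<and>
      act (X j) (syms w (P j)) = (X (Suc j), D j) \<and> upd (P j) (D j) = P (Suc j)" if j: "j < 2 * v" for j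
  proof (cases "odd j")
    case True
    then have e: "(Suc j + 1) div 2 = (j + 1) div 2" by presburger
    have "act (X j) (syms w (P j)) = (X (Suc j), D j)" using True by (simp add: act_Lx1 X_def D_def)
    moreover have "upd (P j) (D j) = P (Suc j)" using gd[of j] True e assms(3) by (simp add: P_def D_def upd_upd upd_stay add.commute)
    ultimately show ?thesis using ok[of j] j by (simp add: X_def)
  next
    case False
    then have e: "(Suc j + 1) div 2 = Suc ((j + 1) div 2)" "(j + 1) div 2 < v" using j by presburger+
    have s1: "syms w (P j) (hT k) \<noteq> LEnd" using e assms(3) by (simp add: syms_LEnd P_def)
    have "act (X j) (syms w (P j)) = (X (Suc j), D j)" using False s1 by (simp add: act_Lx1 X_def D_def)
    moreover have "upd (P j) (D j) = P (Suc j)" using gd[of j] False e assms(3) by (simp add: P_def D_def upd_upd upd_stay algebra_simps)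
    ultimately show ?thesis using ok[of j] j by (simp add: X_def)
  qed
  then have R1: "runs w (to_nat (X 0), P 0) (2 * v) (to_nat (X (2 * v)), P (2 * v))"
    using runs_path[where X=X and P=P and n="2 * v" and D=D] by blast
  have e2: "(2 * v + 1) div 2 = v" by presburger
  have s1: "syms w (P (2 * v)) (hT k) = LEnd" using e2 assms(3) by (simp add: syms_LEnd P_def)
  have "act (X (2 * v)) (syms w (P (2 * v))) = (Ctl Lx2 q a b l ov k cdv False ga gb dr, stay)"
    using s1 by (simp add: act_Lx1 X_def)
  then have R2: "runs w (to_nat (X (2 * v)), P (2 * v)) 1 (to_nat (Ctl Lx2 q a b l ov k cdv False ga gb dr), upd (P (2 * v)) stay)"
    by (intro runs_1 ok) (simp_all add: X_def)
  have "P 0 = p" "X 0 = Ctl Lx1 q a b l ov k cdv False ga gb dr" using assms by (auto simp: P_def X_def)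
  moreover have "upd (P (2 * v)) stay = p(hT k := 0, hF := 2 * int v)" using upd_stay[OF gd[of "2 * v"]] e2 by (simp add: P_def)
  ultimately show ?thesis using runs_trans[OF R1 R2] by simp
qed

lemma lx2:
  fixes q :: 's and a b ga gb :: 'g and ov ee :: bool
  assumes "good p" "okp w p" "k < c"
  shows "runs w (to_nat (Ctl Lx2 q a b l ov k cdv ee ga gb dr), p) 1
                (to_nat (Ctl Lx3 q a b l ov k cdv ee ga gb dr), p(hF := p hF + (if bitk ga k then 1 else 0)))"
proof -
  have "act (Ctl Lx2 q a b l ov k cdv ee ga gb dr) (syms w p) = (Ctl Lx3 q a b l ov k cdv ee ga gb dr, stay(hF := (if bitk ga k then MRight else MStay)))"
    using assms by (simp add: act_Lx2)
  then have "runs w (to_nat (Ctl Lx2 q a b l ov k cdv ee ga gb dr), p) 1 (to_nat (Ctl Lx3 q a b l ov k cdv ee ga gb dr), upd p (stay(hF := (if bitk ga k then MRight else MStay))))"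
    by (intro runs_1 assms) simp_all
  moreover have "upd p (stay(hF := (if bitk ga k then MRight else MStay))) = p(hF := p hF + (if bitk ga k then 1 else 0))"
    using upd_stay[OF assms(1)] by (simp add: upd_upd)
  ultimately show ?thesis by simp
qed

lemma lx3:
  fixes q :: 's and a b ga gb :: 'g and ov ee :: bool and m :: nat
  assumes "good p" "okp w p" "k < c" "p hF = int m" "p (hT k) = 0" "int m \<le> int (length w) + 1"
  shows "runs w (to_nat (Ctl Lx3 q a b l ov k cdv ee ga gb dr), p) (m + 1)
                (to_nat (if Suc k < c then Ctl Lx1 q a b l ov (Suc k) cdv False ga gb dr
                         else Ctl Rd1 q a b l ov 0 0 False ga gb dr), p(hF := 0, hT k := int m))"
proof -
  let ?x = "Ctl Lx3 q a b l ov k cdv ee ga gb dr"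
  let ?y = "if Suc k < c then Ctl Lx1 q a b l ov (Suc k) cdv False ga gb dr else Ctl Rd1 q a b l ov 0 0 False ga gb dr"
  define P where "P j = p(hF := int m - int j, hT k := int j)" for j
  have gd: "good (P j)" for j unfolding P_def using assms by (intro good_fun_upd) auto
  have ok: "okp w (P j)" if "j \<le> m" for j unfolding P_def using assms that by (intro okp_upd) auto
  have "ph ?x \<noteq> Acc \<and> ph ?x \<noteq> Rej \<and> okp w (P j) \<and>
      act ?x (syms w (P j)) = (?x, stay(hF := MLeft, hT k := MRight)) \<and>
      upd (P j) (stay(hF := MLeft, hT k := MRight)) = P (Suc j)" if j: "j < m" for j
  proof -
    have s1: "syms w (P j) hF \<noteq> LEnd" using j by (simp add: syms_LEnd P_def)
    have "act ?x (syms w (P j)) = (?x, stay(hF := MLeft, hT k := MRight))"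
      using s1 by (simp only: act_Lx3 if_False)
    moreover have "upd (P j) (stay(hF := MLeft, hT k := MRight)) = P (Suc j)"
      using gd[of j] assms(3) by (simp add: P_def upd_upd upd_stay algebra_simps)
    ultimately show ?thesis using ok[of j] j by simp
  qed
  then have R1: "runs w (to_nat ?x, P 0) m (to_nat ?x, P m)"
    using runs_path[where X="\<lambda>_. ?x" and P=P and n=m and D="\<lambda>_. stay(hF := MLeft, hT k := MRight)"] by blast
  have s1: "syms w (P m) hF = LEnd" by (simp add: syms_LEnd P_def)
  have "act ?x (syms w (P m)) = (?y, stay)"
    using s1 by (simp add: act_Lx3)
  then have R2: "runs w (to_nat ?x, P m) 1 (to_nat ?y, upd (P m) stay)"
    by (intro runs_1 ok) simp_all
  have "P 0 = p" using assms by (auto simp: P_def)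
  moreover have "upd (P m) stay = p(hF := 0, hT k := int m)" using upd_stay[OF gd[of m]] by (simp add: P_def)
  ultimately show ?thesis using runs_trans[OF R1 R2] by simp
qed

lemma init_step:
  fixes q :: 's and a b ga gb :: 'g and ee :: bool
  assumes "good p" "okp w p" "p (hh True) = 0"
  shows "runs w (to_nat (Ctl Init q a b l True k cdv ee ga gb dr), p) 1
                (to_nat (Ctl Rd1 q a b l True 0 0 False ga gb dr), p(hh True := 1))"
proof -
  have "act (Ctl Init q a b l True k cdv ee ga gb dr) (syms w p) = (Ctl Rd1 q a b l True 0 0 False ga gb dr, stay(hh True := MRight))"
    by (simp add: act_Init)
  then have "runs w (to_nat (Ctl Init q a b l True k cdv ee ga gb dr), p) 1 (to_nat (Ctl Rd1 q a b l True 0 0 False ga gb dr), upd p (stay(hh True := MRight)))"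
    by (intro runs_1 assms) simp_all
  then show ?thesis using upd_stay[OF assms(1)] assms(3) by (simp add: upd_upd)
qed

lemma dec_step:
  fixes x :: "('s, 'g) ctl"
  assumes "good p" "okp w p" "(ph x = Rd1 \<and> loc x < 2) \<or> ph x = Dec"
  defines "g \<equiv> (if ph x = Dec then decg (cd x) else if loc x = 0 then w0 x else w1 x)"
  shows "runs w (to_nat x, p) 1 (to_nat (fst (decide x (tape_at w (p hI)) g)), upd p (snd (decide x (tape_at w (p hI)) g)))"
proof -
  have "act x (syms w p) = decide x (tape_at w (p hI)) g"
  proof (cases "ph x = Dec")
    case True then show ?thesis by (simp add: act_def g_def syms_hI)
  next
    case False then have "ph x = Rd1" "loc x < 2" using assms(3) by auto
    then show ?thesis by (simp add: act_def g_def syms_hI)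
  qed
  then show ?thesis using assms(3) by (intro runs_1 assms(2)) auto
qed

end

context sim
begin

definition posR :: "int \<Rightarrow> bool \<Rightarrow> int \<Rightarrow> (nat \<Rightarrow> nat) \<Rightarrow> nat \<Rightarrow> int" where
  "posR i ov H vs = (\<lambda>h. if h = hI then i else if h = hh ov then H
                        else if 5 \<le> h \<and> h < c + 5 then int (vs (h - 5)) else 0)"

lemma posR_simps[simp]:
  "posR i ov H vs hI = i" "posR i ov H vs (hh ov) = H" "posR i ov H vs (hl ov) = 0"
  "posR i ov H vs hF = 0" "k < c \<Longrightarrow> posR i ov H vs (hT k) = int (vs k)"
  by (auto simp: posR_def hdefs)

lemma good_posR: "good (posR i ov H vs)"
  by (auto simp: good_def posR_def hdefs)

lemma okp_posR: "0 \<le> i \<Longrightarrow> i \<le> int (length w) + 1 \<Longrightarrow> 0 \<le> H \<Longrightarrow> H \<le> int (length w) + 1 \<Longrightarrow>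
   (\<And>k. k < c \<Longrightarrow> int (vs k) \<le> int (length w) + 1) \<Longrightarrow> okp w (posR i ov H vs)"
  unfolding okp_def posR_def hdefs
  by (auto simp: less_diff_conv2)

lemma posR_T: "k < c \<Longrightarrow> (posR i ov H vs)(hT k := int x) = posR i ov H (vs(k := x))"
  by (auto simp: posR_def hdefs intro!: ext)

lemma posR_flip: "(posR i ov H vs)(hh ov := 0, hl ov := H') = posR i (\<not> ov) H' vs"
  by (auto simp: posR_def hdefs intro!: ext)

lemma posR_flip2: "(posR i ov H vs)(hl ov := H', hh ov := 0) = posR i (\<not> ov) H' vs"
  by (auto simp: posR_def hdefs intro!: ext)

lemma posR_I: "(posR i ov H vs)(hI := i') = posR i' ov H vs"
  by (auto simp: posR_def hdefs intro!: ext)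

lemma posR_pair: "(posR i ov H vs)(hT k := a, hF := b, hh ov' := x, hl ov' := y, hF := 0, hT k := int v, hl ov' := 0, hh ov' := H')
    = (if k < c then posR i ov' H' (vs(k := v)) else (posR i ov' H' vs)(hT k := int v))"
  by (auto simp: posR_def hdefs intro!: ext)

lemma read_track:
  fixes q :: 's and a b ga gb :: 'g and ov :: bool and H cdv :: nat
  assumes "k < c" "0 < H" "0 \<le> i" "i \<le> int (length w) + 1" "int H \<le> int (length w) + 1"
    "\<And>k. k < c \<Longrightarrow> int (vs k) \<le> int (length w) + 1"
  defines "ov' \<equiv> (ov \<noteq> odd (vs k div H))"
    and "cd' \<equiv> (cdv + (if odd (vs k div H) then 2 ^ k else 0)) mod 2 ^ c"
  shows "runs w (to_nat (Ctl Rd1 q a b 2 ov k cdv False ga gb dr), posR i ov (int H) vs)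
           (2 * vs k + vs k mod H + 3)
           (to_nat (if Suc k < c then Ctl Rd1 q a b 2 ov' (Suc k) cd' False ga gb dr
                    else Ctl Dec q a b 2 ov' 0 cd' False ga gb dr), posR i ov' (int H) vs)"
proof -
  let ?p = "posR i ov (int H) vs"
  let ?v = "vs k"
  have gd: "good ?p" by (rule good_posR)
  have ok: "okp w ?p" using assms by (intro okp_posR) auto
  let ?p1 = "?p(hT k := 0, hF := int ?v, hh ov' := int (H - ?v mod H), hl ov' := int (?v mod H))"
  have R1: "runs w (to_nat (Ctl Rd1 q a b 2 ov k cdv False ga gb dr), ?p) (?v + 1)
                (to_nat (Ctl Rd2 q a b 2 ov' k cdv (odd (?v div H)) ga gb dr), ?p1)"
  proof -
    have "runs w (to_nat (Ctl Rd1 q a b 2 ov k cdv False ga gb dr), ?p) (?v + 1)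
                (to_nat (Ctl Rd2 q a b 2 (ov \<noteq> odd (?v div H)) k cdv (False \<noteq> odd (?v div H)) ga gb dr),
                 ?p(hT k := 0, hF := int ?v, hh (ov \<noteq> odd (?v div H)) := int (H - ?v mod H), hl (ov \<noteq> odd (?v div H)) := int (?v mod H)))"
      by (rule rd1[OF gd ok assms(1)]) (use assms(1-6) in auto)
    then show ?thesis by (simp add: ov'_def)
  qed
  have gd1: "good ?p1" using gd assms(1) by (intro good_fun_upd) auto
  have mH: "?v mod H < H" using assms(2) by simp
  have mH2: "int (?v mod H) \<le> int (length w) + 1" using mH assms(5) by linarith
  have ok1: "okp w ?p1" using ok assms mH mH2 by (intro okp_upd) auto
  let ?p2 = "?p1(hF := 0, hT k := int ?v)"
  have R2: "runs w (to_nat (Ctl Rd2 q a b 2 ov' k cdv (odd (?v div H)) ga gb dr), ?p1) (?v + 1)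
              (to_nat (Ctl Rd3 q a b 2 ov' k cdv (odd (?v div H)) ga gb dr), ?p2)"
  proof -
    have "runs w (to_nat (Ctl Rd2 q a b 2 ov' k cdv (odd (?v div H)) ga gb dr), ?p1) (nat (int ?v) + 1)
              (to_nat (Ctl Rd3 q a b 2 ov' k cdv (odd (?v div H)) ga gb dr), ?p1(hF := 0, hT k := 0 + int ?v))"
      by (rule rd2[OF gd1 ok1 assms(1)]) (use assms(1-6) in simp_all)
    then show ?thesis by simp
  qed
  have gd2: "good ?p2" using gd assms(1) by (intro good_fun_upd) auto
  have ok2: "okp w ?p2" using ok assms mH mH2 by (intro okp_upd) auto
  have R3: "runs w (to_nat (Ctl Rd3 q a b 2 ov' k cdv (odd (?v div H)) ga gb dr), ?p2) (?v mod H + 1)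
              (to_nat (if Suc k < c then Ctl Rd1 q a b 2 ov' (Suc k) cd' False ga gb dr
                    else Ctl Dec q a b 2 ov' 0 cd' False ga gb dr), ?p2(hl ov' := 0, hh ov' := int H))"
    unfolding cd'_def
    by (rule rd3[OF gd2 ok2]) (use mH mH2 assms(1-6) in \<open>simp_all add: of_nat_diff\<close>)
  have eqp: "?p2(hl ov' := 0, hh ov' := int H) = posR i ov' (int H) vs"
    using posR_pair[of i ov "int H" vs k 0 "int ?v" ov' "int (H - ?v mod H)" "int (?v mod H)" ?v "int H"] assms(1)
    by simp
  have cnt: "?v + 1 + (?v + 1) + (?v mod H + 1) = 2 * ?v + ?v mod H + 3" by simp
  show ?thesis using runs_trans[OF runs_trans[OF R1 R2] R3] by (simp only: cnt eqp)
qed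

end

context sim
begin

definition bs :: "(nat \<Rightarrow> nat) \<Rightarrow> nat \<Rightarrow> nat \<Rightarrow> nat" where
  "bs vs H k = (\<Sum>k' < k. if odd (vs k' div H) then 2 ^ k' else 0)"

lemma bs_lt: "bs vs H k < 2 ^ k"
proof (induction k)
  case 0 then show ?case by (simp add: bs_def)
next
  case (Suc k)
  have "bs vs H (Suc k) \<le> bs vs H k + 2 ^ k" by (simp add: bs_def)
  then show ?case using Suc by simp
qed

lemma bs_Suc: "Suc k \<le> c \<Longrightarrow> (bs vs H k + (if odd (vs k div H) then 2 ^ k else 0)) mod 2 ^ c = bs vs H (Suc k)"
proof -
  assume k: "Suc k \<le> c"
  have "bs vs H (Suc k) = bs vs H k + (if odd (vs k div H) then 2 ^ k else 0)" by (simp add: bs_def)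
  moreover have "bs vs H (Suc k) < 2 ^ c" using bs_lt[of vs H "Suc k"] k
    by (meson le_less_trans one_less_numeral_iff power_increasing_iff semiring_norm(76) not_less order.strict_trans2 power_strict_increasing_iff)
  ultimately show ?thesis by simp
qed

lemma posR_cong: "(\<And>k. k < c \<Longrightarrow> vs k = vs' k) \<Longrightarrow> posR i ov H vs = posR i ov H vs'"
  by (auto simp: posR_def intro!: ext)

lemma read_all:
  fixes q :: 's and a b ga gb :: 'g and ov :: bool and H :: nat
  assumes "k < c" "0 < H" "0 \<le> i" "i \<le> int (length w) + 1" "int H \<le> int (length w) + 1"
    "\<And>k. k < c \<Longrightarrow> int (vs k) \<le> int (length w) + 1"
  shows "\<exists>ov'. runs w (to_nat (Ctl Rd1 q a b 2 ov k (bs vs H k) False ga gb dr), posR i ov (int H) vs)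
           (\<Sum>k'\<in>{k..<c}. 2 * vs k' + vs k' mod H + 3)
           (to_nat (Ctl Dec q a b 2 ov' 0 (bs vs H c) False ga gb dr), posR i ov' (int H) vs)"
  using assms
proof (induction "c - k" arbitrary: k ov)
  case 0 then show ?case by simp
next
  case (Suc m)
  let ?ov' = "ov \<noteq> odd (vs k div H)"
  have R0: "runs w (to_nat (Ctl Rd1 q a b 2 ov k (bs vs H k) False ga gb dr), posR i ov (int H) vs)
           (2 * vs k + vs k mod H + 3)
           (to_nat (if Suc k < c then Ctl Rd1 q a b 2 ?ov' (Suc k) ((bs vs H k + (if odd (vs k div H) then 2 ^ k else 0)) mod 2 ^ c) False ga gb dr
                    else Ctl Dec q a b 2 ?ov' 0 ((bs vs H k + (if odd (vs k div H) then 2 ^ k else 0)) mod 2 ^ c) False ga gb dr), posR i ?ov' (int H) vs)"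
    by (rule read_track[where vs=vs and k=k and H=H and i=i and q=q and a=a and b=b and ov=ov and cdv="bs vs H k" and ga=ga and gb=gb and dr=dr, OF Suc.prems])
  have R: "runs w (to_nat (Ctl Rd1 q a b 2 ov k (bs vs H k) False ga gb dr), posR i ov (int H) vs)
           (2 * vs k + vs k mod H + 3)
           (to_nat (if Suc k < c then Ctl Rd1 q a b 2 ?ov' (Suc k) (bs vs H (Suc k)) False ga gb dr
                    else Ctl Dec q a b 2 ?ov' 0 (bs vs H (Suc k)) False ga gb dr), posR i ?ov' (int H) vs)"
    using R0 unfolding bs_Suc[OF Suc_leI[OF Suc.prems(1)]] .
  show ?case
  proof (cases "Suc k < c")
    case True
    obtain ov'' where R2: "runs w (to_nat (Ctl Rd1 q a b 2 ?ov' (Suc k) (bs vs H (Suc k)) False ga gb dr), posR i ?ov' (int H) vs)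
           (\<Sum>k'\<in>{Suc k..<c}. 2 * vs k' + vs k' mod H + 3)
           (to_nat (Ctl Dec q a b 2 ov'' 0 (bs vs H c) False ga gb dr), posR i ov'' (int H) vs)"
    proof -
      have m: "m = c - Suc k" using Suc.hyps(2) by simp
      show ?thesis using Suc.hyps(1)[OF m True Suc.prems(2-), of ?ov'] that by blast
    qed
    have "(\<Sum>k'\<in>{k..<c}. 2 * vs k' + vs k' mod H + 3) = (2 * vs k + vs k mod H + 3) + (\<Sum>k'\<in>{Suc k..<c}. 2 * vs k' + vs k' mod H + 3)"
      using Suc.prems(1) by (simp add: sum.atLeast_Suc_lessThan)
    then show ?thesis using runs_trans[OF R[simplified True if_True] R2] by auto
  next
    case False
    then have "c = Suc k" using Suc.prems(1) by simp
    then show ?thesis using R by auto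
  qed
qed

definition wv :: "(nat \<Rightarrow> nat) \<Rightarrow> nat \<Rightarrow> 'g \<Rightarrow> 'g \<Rightarrow> nat \<Rightarrow> nat" where
  "wv vs H go gn k = (if bitk go k = bitk gn k then vs k else if bitk gn k then vs k + H else vs k - H)"

definition wcost :: "nat \<Rightarrow> 'g \<Rightarrow> 'g \<Rightarrow> nat \<Rightarrow> nat" where
  "wcost H go gn k = (if bitk go k = bitk gn k then 1 else H + 1)"

lemma write_all:
  fixes q :: 's and a b go gn :: 'g and ov ee :: bool and H :: nat
  assumes "k \<le> c" "0 < H" "0 \<le> i" "i \<le> int (length w) + 1" "int H \<le> int (length w) + 1"
    "\<And>k. k < c \<Longrightarrow> int (vs k) \<le> int (length w) + 1"
    "\<And>k'. k \<le> k' \<Longrightarrow> k' < c \<Longrightarrow> int (wv vs H go gn k') \<le> int (length w) + 1"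
    "\<And>k'. k \<le> k' \<Longrightarrow> k' < c \<Longrightarrow> bitk go k' \<noteq> bitk gn k' \<Longrightarrow> \<not> bitk gn k' \<Longrightarrow> H \<le> vs k'"
  shows "\<exists>ov'. runs w (to_nat (Ctl Wr q a b 2 ov k cdv ee go gn dr), posR i ov (int H) vs)
           (\<Sum>k'\<in>{k..<c}. wcost H go gn k')
           (to_nat (Ctl Wr q a b 2 ov' c cdv ee go gn dr), posR i ov' (int H) (\<lambda>k'. if k \<le> k' then wv vs H go gn k' else vs k'))"
  using assms
proof (induction "c - k" arbitrary: k ov vs)
  case 0
  then have "k = c" by simp
  moreover have "posR i ov (int H) (\<lambda>k'. if c \<le> k' then wv vs H go gn k' else vs k') = posR i ov (int H) vs"
    by (rule posR_cong) simp
  ultimately show ?case by (intro exI[of _ ov]) simp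
next
  case (Suc m)
  then have k: "k < c" by simp
  let ?vs1 = "vs(k := wv vs H go gn k)"
  have "\<exists>ov1. runs w (to_nat (Ctl Wr q a b 2 ov k cdv ee go gn dr), posR i ov (int H) vs) (wcost H go gn k)
           (to_nat (Ctl Wr q a b 2 ov1 (Suc k) cdv ee go gn dr), posR i ov1 (int H) ?vs1)"
  proof (cases "bitk go k = bitk gn k")
    case True
    have "runs w (to_nat (Ctl Wr q a b 2 ov k cdv ee go gn dr), posR i ov (int H) vs) 1
           (to_nat (Ctl Wr q a b 2 ov (Suc k) cdv ee go gn dr), posR i ov (int H) vs)"
      by (rule wr_same[OF good_posR _ k True]) (use Suc.prems in \<open>intro okp_posR; auto\<close>)
    moreover have "?vs1 = vs" using True by (auto simp: wv_def)
    ultimately show ?thesis using True by (auto simp: wcost_def)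
  next
    case False
    have ok: "okp w (posR i ov (int H) vs)" using Suc.prems by (intro okp_posR) auto
    have nb: "0 \<le> int (vs k) + (if bitk gn k then int H else - int H)"
         "int (vs k) + (if bitk gn k then int H else - int H) \<le> int (length w) + 1"
      using Suc.prems(7)[OF order.refl k] Suc.prems(8)[OF order.refl k False] False by (auto simp: wv_def of_nat_diff)
    have "runs w (to_nat (Ctl Wr q a b 2 ov k cdv ee go gn dr), posR i ov (int H) vs) (H + 1)
           (to_nat (Ctl Wr q a b 2 (\<not> ov) (Suc k) cdv ee go gn dr),
            (posR i ov (int H) vs)(hh ov := 0, hl ov := int H, hT k := int (vs k) + (if bitk gn k then int H else - int H)))"
      by (rule wr_diff[OF good_posR ok k False]) (use Suc.prems nb k in auto)
    moreover have "int (vs k) + (if bitk gn k then int H else - int H) = int (wv vs H go gn k)"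
      using Suc.prems(8)[OF order.refl k False] False by (auto simp: wv_def of_nat_diff)
    moreover have "(posR i ov (int H) vs)(hh ov := 0, hl ov := int H, hT k := int (wv vs H go gn k)) = posR i (\<not> ov) (int H) ?vs1"
      using k by (simp add: posR_flip posR_T)
    ultimately show ?thesis using False by (auto simp: wcost_def)
  qed
  then obtain ov1 where R1: "runs w (to_nat (Ctl Wr q a b 2 ov k cdv ee go gn dr), posR i ov (int H) vs) (wcost H go gn k)
           (to_nat (Ctl Wr q a b 2 ov1 (Suc k) cdv ee go gn dr), posR i ov1 (int H) ?vs1)" by blast
  have wv1: "wv ?vs1 H go gn k' = wv vs H go gn k'" if "k' \<noteq> k" for k' using that by (simp add: wv_def)
  have IH: "\<exists>ov'. runs w (to_nat (Ctl Wr q a b 2 ov1 (Suc k) cdv ee go gn dr), posR i ov1 (int H) ?vs1)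
           (\<Sum>k'\<in>{Suc k..<c}. wcost H go gn k')
           (to_nat (Ctl Wr q a b 2 ov' c cdv ee go gn dr), posR i ov' (int H) (\<lambda>k'. if Suc k \<le> k' then wv ?vs1 H go gn k' else ?vs1 k'))"
  proof (rule Suc.hyps(1))
    show "m = c - Suc k" using Suc.hyps(2) by simp
    show "Suc k \<le> c" using k by simp
    show "int (?vs1 k') \<le> int (length w) + 1" if "k' < c" for k' using Suc.prems(6) Suc.prems(7)[OF order.refl k] that by auto
    show "int (wv ?vs1 H go gn k') \<le> int (length w) + 1" if "Suc k \<le> k'" "k' < c" for k'
      using Suc.prems(7)[of k'] that wv1[of k'] by simp
    show "H \<le> ?vs1 k'" if "Suc k \<le> k'" "k' < c" "bitk go k' \<noteq> bitk gn k'" "\<not> bitk gn k'" for k'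
      using that Suc.prems(8)[of k'] by simp
  qed (use Suc.prems in auto)
  then obtain ov' where R2: "runs w (to_nat (Ctl Wr q a b 2 ov1 (Suc k) cdv ee go gn dr), posR i ov1 (int H) ?vs1)
           (\<Sum>k'\<in>{Suc k..<c}. wcost H go gn k')
           (to_nat (Ctl Wr q a b 2 ov' c cdv ee go gn dr), posR i ov' (int H) (\<lambda>k'. if Suc k \<le> k' then wv ?vs1 H go gn k' else ?vs1 k'))"
    by blast
  have "(\<lambda>k'. if Suc k \<le> k' then wv ?vs1 H go gn k' else ?vs1 k') = (\<lambda>k'. if k \<le> k' then wv vs H go gn k' else vs k')"
  proof (rule ext)
    fix k' show "(if Suc k \<le> k' then wv ?vs1 H go gn k' else ?vs1 k') = (if k \<le> k' then wv vs H go gn k' else vs k')"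
      using wv1[of k'] by (cases "k' = k") auto
  qed
  moreover have "(\<Sum>k'\<in>{k..<c}. wcost H go gn k') = wcost H go gn k + (\<Sum>k'\<in>{Suc k..<c}. wcost H go gn k')"
    using k by (simp add: sum.atLeast_Suc_lessThan)
  ultimately show ?case using runs_trans[OF R1 R2] by auto
qed

end

context sim
begin

definition bb :: "'g \<Rightarrow> nat \<Rightarrow> nat" where "bb g k = (if bitk g k then 1 else 0)"

lemma lx_all:
  fixes q :: 's and a b ga gb :: 'g and ov :: bool
  assumes "k < c" "0 \<le> i" "i \<le> int (length w) + 1"
    "\<And>k. k < c \<Longrightarrow> int (vs k) \<le> int (length w) + 1"
    "\<And>k'. k \<le> k' \<Longrightarrow> k' < c \<Longrightarrow> 2 * int (vs k') + 1 \<le> int (length w) + 1"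
  shows "runs w (to_nat (Ctl Lx1 q a b 0 ov k cdv False ga gb dr), posR i ov 1 vs)
           (\<Sum>k'\<in>{k..<c}. 4 * vs k' + bb ga k' + 3)
           (to_nat (Ctl Rd1 q a b 0 ov 0 0 False ga gb dr), posR i ov 1 (\<lambda>k'. if k \<le> k' then 2 * vs k' + bb ga k' else vs k'))"
  using assms
proof (induction "c - k" arbitrary: k vs)
  case 0 then show ?case by simp
next
  case (Suc m)
  note k = Suc.prems(1)
  let ?p = "posR i ov 1 vs"
  let ?v = "vs k"
  let ?m = "2 * ?v + bb ga k"
  have ok: "okp w ?p" using Suc.prems by (intro okp_posR) auto
  have gd: "good ?p" by (rule good_posR)
  have b2: "2 * int ?v + 1 \<le> int (length w) + 1" using Suc.prems(5)[OF order.refl k] .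
  let ?p1 = "?p(hT k := 0, hF := 2 * int ?v)"
  have R1: "runs w (to_nat (Ctl Lx1 q a b 0 ov k cdv False ga gb dr), ?p) (2 * ?v + 1)
               (to_nat (Ctl Lx2 q a b 0 ov k cdv False ga gb dr), ?p1)"
    by (rule lx1[OF gd ok k]) (use b2 k in auto)
  have gd1: "good ?p1" using gd k by (intro good_fun_upd) auto
  have ok1: "okp w ?p1" using ok b2 by (intro okp_upd) auto
  let ?p2 = "?p1(hF := ?p1 hF + (if bitk ga k then 1 else 0))"
  have R2: "runs w (to_nat (Ctl Lx2 q a b 0 ov k cdv False ga gb dr), ?p1) 1
               (to_nat (Ctl Lx3 q a b 0 ov k cdv False ga gb dr), ?p2)"
    by (rule lx2[OF gd1 ok1 k])
  have p2: "?p2 = ?p(hT k := 0, hF := int ?m)" by (simp add: bb_def)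
  have gd2: "good (?p(hT k := 0, hF := int ?m))" using gd k by (intro good_fun_upd) auto
  have ok2: "okp w (?p(hT k := 0, hF := int ?m))" using ok b2 by (intro okp_upd) (auto simp: bb_def)
  have R3: "runs w (to_nat (Ctl Lx3 q a b 0 ov k cdv False ga gb dr), ?p(hT k := 0, hF := int ?m)) (?m + 1)
              (to_nat (if Suc k < c then Ctl Lx1 q a b 0 ov (Suc k) cdv False ga gb dr
                         else Ctl Rd1 q a b 0 ov 0 0 False ga gb dr), (?p(hT k := 0, hF := int ?m))(hF := 0, hT k := int ?m))"
    by (rule lx3[OF gd2 ok2 k]) (use b2 k in \<open>auto simp: bb_def\<close>)
  have p3: "(?p(hT k := 0, hF := int ?m))(hF := 0, hT k := int ?m) = posR i ov 1 (vs(k := ?m))"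
    using k by (auto simp: posR_def hdefs intro!: ext)
  have R123: "runs w (to_nat (Ctl Lx1 q a b 0 ov k cdv False ga gb dr), ?p) (2 * ?v + 1 + 1 + (?m + 1))
              (to_nat (if Suc k < c then Ctl Lx1 q a b 0 ov (Suc k) cdv False ga gb dr
                         else Ctl Rd1 q a b 0 ov 0 0 False ga gb dr), posR i ov 1 (vs(k := ?m)))"
    using runs_trans[OF runs_trans[OF R1 R2] R3[folded p2]] p3 by simp
  have cnt: "2 * ?v + 1 + 1 + (?m + 1) = 4 * ?v + bb ga k + 3" by simp
  show ?case
  proof (cases "Suc k < c")
    case True
    have m: "m = c - Suc k" using Suc.hyps(2) by simp
    have IH: "runs w (to_nat (Ctl Lx1 q a b 0 ov (Suc k) cdv False ga gb dr), posR i ov 1 (vs(k := ?m)))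
           (\<Sum>k'\<in>{Suc k..<c}. 4 * (vs(k := ?m)) k' + bb ga k' + 3)
           (to_nat (Ctl Rd1 q a b 0 ov 0 0 False ga gb dr), posR i ov 1 (\<lambda>k'. if Suc k \<le> k' then 2 * (vs(k := ?m)) k' + bb ga k' else (vs(k := ?m)) k'))"
    proof (rule Suc.hyps(1)[OF m True Suc.prems(2,3)])
      show "int ((vs(k := ?m)) k') \<le> int (length w) + 1" if "k' < c" for k'
        using Suc.prems(4)[OF that] b2 by (auto simp: bb_def)
      show "2 * int ((vs(k := ?m)) k') + 1 \<le> int (length w) + 1" if "Suc k \<le> k'" "k' < c" for k'
        using Suc.prems(5)[of k'] that by auto
    qed
    have s1: "(\<Sum>k'\<in>{Suc k..<c}. 4 * (vs(k := ?m)) k' + bb ga k' + 3) = (\<Sum>k'\<in>{Suc k..<c}. 4 * vs k' + bb ga k' + 3)"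
      by (rule sum.cong) auto
    have s2: "(\<Sum>k'\<in>{k..<c}. 4 * vs k' + bb ga k' + 3) = (4 * ?v + bb ga k + 3) + (\<Sum>k'\<in>{Suc k..<c}. 4 * vs k' + bb ga k' + 3)"
      using k by (simp add: sum.atLeast_Suc_lessThan)
    have s3: "(\<lambda>k'. if Suc k \<le> k' then 2 * (vs(k := ?m)) k' + bb ga k' else (vs(k := ?m)) k') = (\<lambda>k'. if k \<le> k' then 2 * vs k' + bb ga k' else vs k')"
    proof (rule ext)
      fix k' show "(if Suc k \<le> k' then 2 * (vs(k := ?m)) k' + bb ga k' else (vs(k := ?m)) k') = (if k \<le> k' then 2 * vs k' + bb ga k' else vs k')"
        by (cases "k' = k") auto
    qed
    show ?thesis using runs_trans[OF R123[unfolded if_P[OF True]] IH] unfolding s1 s2 s3 cnt by (simp add: add.commute)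
  next
    case False
    have c: "k' < c \<Longrightarrow> k' \<le> k" for k' using False by simp
    have eqv: "posR i ov 1 (vs(k := ?m)) = posR i ov 1 (\<lambda>k'. if k \<le> k' then 2 * vs k' + bb ga k' else vs k')"
    proof (rule posR_cong)
      fix k' assume "k' < c"
      then show "(vs(k := ?m)) k' = (if k \<le> k' then 2 * vs k' + bb ga k' else vs k')"
        using c[of k'] by (cases "k' = k") auto
    qed
    have "{k..<c} = {k}" using False k by auto
    then have s: "(\<Sum>k'\<in>{k..<c}. 4 * vs k' + bb ga k' + 3) = 4 * ?v + bb ga k + 3" by simp
    show ?thesis using R123[unfolded if_not_P[OF False]] unfolding s eqv cnt .
  qed
qed

lemma dbl_posR:
  fixes q :: 's and a b ga gb :: 'g and ov :: bool and H :: nat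
  assumes "okp w (posR i ov (int H) vs)" "0 < H" "2 * int H \<le> int (length w) + 1"
  shows "runs w (to_nat (Ctl Dbl q a b l ov k cdv False ga gb dr), posR i ov (int H) vs) (2 * H + 1)
                (to_nat (Ctl Rd1 q a b l (\<not> ov) 0 0 False ga gb dr), posR i (\<not> ov) (int (2 * H)) vs)"
proof -
  have "runs w (to_nat (Ctl Dbl q a b l ov k cdv False ga gb dr), posR i ov (int H) vs) (2 * H + 1)
                (to_nat (Ctl Rd1 q a b l (\<not> ov) 0 0 False ga gb dr), (posR i ov (int H) vs)(hh ov := 0, hl ov := 2 * int H))"
    by (rule dbl[OF good_posR assms(1)]) (use assms in auto)
  then show ?thesis by (simp add: posR_flip)
qed

lemma hlv_posR:
  fixes q :: 's and a b ga gb :: 'g and ov :: bool and H :: nat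
  assumes "okp w (posR i ov (int H) vs)" "0 < H" "H = 1 \<or> even H"
  shows "runs w (to_nat (Ctl Hlv q a b l ov k cdv False ga gb dr), posR i ov (int H) vs) (H + 1)
                (if H = 1 then (to_nat (Ctl Rd1 q a b 1 ov 0 0 False ga gb dr), posR i ov (int H) vs)
                 else (to_nat (Ctl Rd1 q a b l (\<not> ov) 0 0 False ga gb dr), posR i (\<not> ov) (int (H div 2)) vs))"
proof -
  have "runs w (to_nat (Ctl Hlv q a b l ov k cdv False ga gb dr), posR i ov (int H) vs) (H + 1)
                (if H = 1 then (to_nat (Ctl Rd1 q a b 1 ov 0 0 False ga gb dr), posR i ov (int H) vs)
                 else (to_nat (Ctl Rd1 q a b l (\<not> ov) 0 0 False ga gb dr), (posR i ov (int H) vs)(hh ov := 0, hl ov := int (H div 2))))"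
    by (rule hlv[OF good_posR assms(1)]) (use assms in auto)
  then show ?thesis
  proof (cases "H = 1")
    case True
    then show ?thesis using \<open>runs w _ (H + 1) _\<close> by (simp only: simp_thms if_True)
  next
    case False
    then show ?thesis using \<open>runs w _ (H + 1) _\<close> by (simp only: False if_False posR_flip)
  qed
qed

end

definition digsum :: "(nat \<Rightarrow> bool) \<Rightarrow> nat \<Rightarrow> nat" where
  "digsum f D = (\<Sum>d<D. if f d then 2 ^ d else 0)"

lemma digsum_Suc: "digsum f (Suc D) = digsum f D + (if f D then 2 ^ D else 0)"
  by (simp add: digsum_def)

lemma digsum_0[simp]: "digsum f 0 = 0"
  by (simp add: digsum_def)

lemma digsum_lt: "digsum f D < 2 ^ D"
proof (induction D)
  case 0 then show ?case by simp
next
  case (Suc D) then show ?case by (simp add: digsum_Suc)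
qed

lemma digsum_lt_m: "(\<And>d. m \<le> d \<Longrightarrow> \<not> f d) \<Longrightarrow> digsum f D < 2 ^ m"
proof (induction D)
  case 0 then show ?case by simp
next
  case (Suc D)
  show ?case
  proof (cases "m \<le> D")
    case True then show ?thesis using Suc by (simp add: digsum_Suc)
  next
    case False
    have "digsum f (Suc D) < 2 ^ Suc D" by (rule digsum_lt)
    also have "(2::nat) ^ Suc D \<le> 2 ^ m" using False by (intro power_increasing) auto
    finally show ?thesis .
  qed
qed

lemma digsum_bit: "d0 < D \<Longrightarrow> odd (digsum f D div 2 ^ d0) = f d0"
proof (induction D)
  case 0 then show ?case by simp
next
  case (Suc D)
  show ?case
  proof (cases "d0 = D")
    case True
    have "digsum f (Suc D) div 2 ^ D = (if f D then 1 else 0)"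
    proof -
      have "digsum f (Suc D) = digsum f D + (if f D then 1 else 0) * 2 ^ D" by (simp add: digsum_Suc)
      moreover have "digsum f D < 2 ^ D" by (rule digsum_lt)
      ultimately show ?thesis by simp
    qed
    then show ?thesis using True by simp
  next
    case False
    then have lt: "d0 < D" using Suc.prems by simp
    have dv: "(2::nat) ^ d0 dvd (if f D then 2 ^ D else 0)" using lt by (simp add: le_imp_power_dvd)
    have "digsum f (Suc D) div 2 ^ d0 = digsum f D div 2 ^ d0 + (if f D then 2 ^ D else 0) div 2 ^ d0"
      by (simp add: digsum_Suc div_plus_div_distrib_dvd_right[OF dv])
    moreover have "even ((if f D then 2 ^ D else 0) div (2::nat) ^ d0)"
      using lt by (auto simp: power_diff[symmetric])
    ultimately show ?thesis using Suc.IH[OF lt] by simp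
  qed
qed

lemma digsum_upd: "d0 < D \<Longrightarrow> (\<And>d. d \<noteq> d0 \<Longrightarrow> g d = f d) \<Longrightarrow>
   digsum g D + (if f d0 then 2 ^ d0 else 0) = digsum f D + (if g d0 then 2 ^ d0 else 0)"
proof (induction D)
  case 0 then show ?case by simp
next
  case (Suc D)
  show ?case
  proof (cases "d0 = D")
    case True
    have h1: "digsum g D = digsum f D" unfolding digsum_def using True Suc.prems(2) by (intro sum.cong) auto
    show ?thesis using h1 True by (simp add: digsum_Suc)
  next
    case False
    then have "d0 < D" using Suc.prems by simp
    then have "digsum g D + (if f d0 then 2 ^ d0 else 0) = digsum f D + (if g d0 then 2 ^ d0 else 0)"
      using Suc.IH Suc.prems(2) by blast
    then show ?thesis using Suc.prems(2)[of D] False by (simp add: digsum_Suc)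
  qed
qed

lemma digsum_shift: "\<not> f D \<Longrightarrow> digsum (\<lambda>d. if d = 0 then b else f (d - 1)) (Suc D) = 2 * digsum f D + (if b then 1 else 0)"
proof (induction D arbitrary: f)
  case 0 then show ?case by (simp add: digsum_Suc)
next
  case (Suc D)
  have "digsum (\<lambda>d. if d = 0 then b else f (d - 1)) (Suc (Suc D)) =
        digsum (\<lambda>d. if d = 0 then b else f (d - 1)) (Suc D) + (if f D then 2 ^ Suc D else 0)"
    by (simp add: digsum_Suc)
  moreover have "digsum (\<lambda>d. if d = 0 then b else f (d - 1)) (Suc D) = 2 * digsum f D + (if b then 1 else 0)"
  proof (cases "f D")
    case False then show ?thesis by (rule Suc.IH)
  next
    case True
    let ?g = "f(D := False)"
    have "digsum (\<lambda>d. if d = 0 then b else ?g (d - 1)) (Suc D) = 2 * digsum ?g D + (if b then 1 else 0)"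
      by (rule Suc.IH) simp
    moreover have "digsum (\<lambda>d. if d = 0 then b else ?g (d - 1)) (Suc D) = digsum (\<lambda>d. if d = 0 then b else f (d - 1)) (Suc D)"
      unfolding digsum_def by (intro sum.cong) auto
    moreover have "digsum ?g D = digsum f D" unfolding digsum_def by (intro sum.cong) auto
    ultimately show ?thesis by simp
  qed
  moreover have "digsum f (Suc D) = digsum f D + (if f D then 2 ^ D else 0)" by (simp add: digsum_Suc)
  ultimately show ?case using Suc.prems by (simp add: digsum_Suc)
qed

lemma digsum_bits: "(n::nat) < 2 ^ D \<Longrightarrow> digsum (\<lambda>d. odd (n div 2 ^ d)) D = n"
proof -
  assume n: "n < 2 ^ D"
  have "take_bit D n = (\<Sum>k = 0..<D. push_bit k (of_bool (bit n k)))" by (rule take_bit_sum)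
  also have "\<dots> = digsum (\<lambda>d. odd (n div 2 ^ d)) D"
    unfolding digsum_def by (intro sum.cong) (auto simp: push_bit_eq_mult bit_iff_odd)
  finally show ?thesis using n by (simp add: take_bit_nat_eq_self)
qed


locale simw = sim M c e for M :: "('s::finite, 'a::finite, 'g::finite) tm" and c e +
  fixes w :: "'a list"
  assumes space: "tm_space_within M w \<lfloor>log 2 (real (length w) + 2)\<rfloor>"
begin

definition SS :: nat where "SS = nat \<lfloor>log 2 (real (length w) + 2)\<rfloor>"

definition cf :: "nat \<Rightarrow> ('s, 'g) tm_conf" where "cf t = tm_conf_at M w t"
definition qq :: "nat \<Rightarrow> 's" where "qq t = fst (cf t)"
definition ii :: "nat \<Rightarrow> int" where "ii t = fst (snd (cf t))"
definition jj :: "nat \<Rightarrow> int" where "jj t = fst (snd (snd (cf t)))"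
definition tt :: "nat \<Rightarrow> int \<Rightarrow> 'g" where "tt t = snd (snd (snd (cf t)))"
definition dlt :: "nat \<Rightarrow> 's \<times> move \<times> 'g \<times> move" where
  "dlt t = tm_delta M (qq t) (tape_at w (ii t)) (tt t (jj t))"

lemma cf_eq: "cf t = (qq t, ii t, jj t, tt t)"
  by (simp add: qq_def ii_def jj_def tt_def)

lemma cf_Suc: "cf (Suc t) = tm_step M w (cf t)"
  by (simp add: cf_def tm_conf_at_def)

lemma step_comp:
  "qq (Suc t) = fst (dlt t)" "ii (Suc t) = ii t + mv (fst (snd (dlt t)))"
  "jj (Suc t) = jj t + mv (snd (snd (snd (dlt t))))"
  "tt (Suc t) = (tt t)(jj t := fst (snd (snd (dlt t))))"
  using cf_Suc[of t] cf_eq[of t] cf_eq[of "Suc t"]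
  by (auto simp: tm_step_def dlt_def split: prod.splits)

lemma init_comp: "qq 0 = tm_start M" "ii 0 = 0" "jj 0 = 0" "tt 0 = (\<lambda>_. tm_blank M)"
  by (simp_all add: qq_def ii_def jj_def tt_def cf_def tm_conf_at_def tm_init_def)

lemma mv_bound: "-1 \<le> mv d \<and> mv d \<le> 1"
  by (cases d) auto

primrec lo :: "nat \<Rightarrow> int" where
  "lo 0 = 0" | "lo (Suc t) = min (lo t) (jj (Suc t))"

primrec hi :: "nat \<Rightarrow> int" where
  "hi 0 = 0" | "hi (Suc t) = max (hi t) (jj (Suc t))"

lemma jj_in: "lo t \<le> jj t \<and> jj t \<le> hi t"
  by (cases t) (auto simp: init_comp)

lemma V_eq: "jj ` {..t} = {lo t..hi t}"
proof (induction t)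
  case 0 then show ?case by (simp add: init_comp)
next
  case (Suc t)
  have "jj ` {..Suc t} = insert (jj (Suc t)) (jj ` {..t})" by (simp add: atMost_Suc)
  also have "\<dots> = insert (jj (Suc t)) {lo t..hi t}" using Suc by simp
  also have "\<dots> = {lo (Suc t)..hi (Suc t)}"
  proof -
    have "lo t - 1 \<le> jj (Suc t)" "jj (Suc t) \<le> hi t + 1"
      using step_comp(3)[of t] mv_bound[of "snd (snd (snd (dlt t)))"] jj_in[of t] by auto
    then show ?thesis by auto
  qed
  finally show ?case .
qed

lemma lo_le_hi: "lo t \<le> hi t"
  using jj_in[of t] by simp

lemma tt_out: "x < lo t \<or> hi t < x \<Longrightarrow> tt t x = tm_blank M"
proof (induction t)
  case 0 then show ?case by (simp add: init_comp)
next
  case (Suc t)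
  have "lo (Suc t) \<le> lo t" "hi t \<le> hi (Suc t)" by auto
  then have "x < lo t \<or> hi t < x" using Suc.prems by auto
  moreover then have "x \<noteq> jj t" using jj_in[of t] by auto
  ultimately show ?case using Suc.IH by (simp add: step_comp)
qed

lemma space_bd:
  assumes "\<forall>j<t. \<not> tm_halted M w (cf j)"
  shows "hi t - lo t + 1 \<le> int SS"
proof -
  have "int (card ((\<lambda>j. fst (snd (snd (tm_conf_at M w j)))) ` {..t})) \<le> \<lfloor>log 2 (real (length w) + 2)\<rfloor>"
    using space assms unfolding tm_space_within_def cf_def by blast
  moreover have "(\<lambda>j. fst (snd (snd (tm_conf_at M w j)))) ` {..t} = {lo t..hi t}"
    using V_eq[of t] by (simp add: jj_def cf_def)
  ultimately have a: "int (card {lo t..hi t}) \<le> \<lfloor>log 2 (real (length w) + 2)\<rfloor>" by simp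
  have b: "int (card {lo t..hi t}) = hi t - lo t + 1" using lo_le_hi[of t] by simp
  have "1 \<le> log 2 (real (length w) + 2)" by (subst one_le_log_cancel_iff) auto
  then have "0 \<le> \<lfloor>log 2 (real (length w) + 2)\<rfloor>" by linarith
  then have "int SS = \<lfloor>log 2 (real (length w) + 2)\<rfloor>" by (simp add: SS_def)
  then show ?thesis using a b by linarith
qed

lemma pow_SS: "2 ^ SS \<le> length w + 2"
proof -
  have "(2::real) ^ nat \<lfloor>log 2 (real (length w) + 2)\<rfloor> \<le> real (length w) + 2"
    by (rule power_of_nat_log_le) auto
  then have "real (2 ^ SS) \<le> real (length w + 2)" by (simp add: SS_def)
  then show ?thesis by (simp only: of_nat_le_iff)
qed

lemma SS_pos: "1 \<le> SS"
proof -
  have "1 \<le> log 2 (real (length w) + 2)" by (subst one_le_log_cancel_iff) auto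
  then show ?thesis unfolding SS_def by linarith
qed

definition val :: "nat \<Rightarrow> nat \<Rightarrow> nat" where
  "val t k = digsum (\<lambda>d. bitk (tt t (lo t + 2 + int d)) k) SS"

lemma bitk_blank: "\<not> bitk (tm_blank M) k"
  by (simp add: bitk_def e_blank)

lemma val_lt:
  assumes "hi t - lo t + 1 \<le> int SS"
  shows "val t k < 2 ^ nat (hi t - lo t - 1)"
  unfolding val_def
proof (rule digsum_lt_m)
  fix d assume "nat (hi t - lo t - 1) \<le> d"
  then have "hi t < lo t + 2 + int d" by linarith
  then show "\<not> bitk (tt t (lo t + 2 + int d)) k" using tt_out bitk_blank by simp
qed

end

context simw
begin

definition Lc :: "nat \<Rightarrow> nat" where
  "Lc t = (if jj t - lo t < 2 then nat (jj t - lo t) else 2)"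

definition HH :: "nat \<Rightarrow> nat" where
  "HH t = (if jj t - lo t < 2 then 1 else 2 ^ nat (jj t - lo t - 2))"

definition Rep :: "nat \<Rightarrow> fa_conf \<Rightarrow> bool" where
  "Rep t C \<longleftrightarrow> (\<exists>ov ga gb dr. C = (to_nat (Ctl Rd1 (qq t) (tt t (lo t)) (tt t (lo t + 1)) (Lc t) ov 0 0 False ga gb dr),
                                  posR (ii t) ov (int (HH t)) (val t)))"

definition nohalt :: "nat \<Rightarrow> bool" where
  "nohalt t \<longleftrightarrow> (\<forall>j\<le>t. \<not> tm_halted M w (cf j))"

lemma nohalt_space: "nohalt t \<Longrightarrow> hi t - lo t + 1 \<le> int SS"
  by (rule space_bd) (auto simp: nohalt_def)

lemma nohalt_space1: "nohalt t \<Longrightarrow> hi (Suc t) - lo (Suc t) + 1 \<le> int SS"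
  by (rule space_bd) (auto simp: nohalt_def less_Suc_eq_le)

lemma nohalt_state: "nohalt t \<Longrightarrow> qq t \<notin> tm_acc M \<and> qq t \<notin> tm_rej M \<and> in_range w (ii t)"
  unfolding nohalt_def tm_halted_def using cf_eq[of t] by force

lemma pw_le: "x < SS \<Longrightarrow> (2::nat) ^ x \<le> length w + 1"
proof -
  assume "x < SS"
  then have "(2::nat) ^ x \<le> 2 ^ (SS - 1)" by (intro power_increasing) auto
  moreover have "2 * 2 ^ (SS - 1) = (2::nat) ^ SS" using SS_pos by (simp add: power_Suc[symmetric])
  ultimately show ?thesis using pow_SS by linarith
qed

lemma val_lt2: "hi t - lo t + 1 \<le> int SS \<Longrightarrow> val t k < 2 ^ (SS - 1)"
proof -
  assume h: "hi t - lo t + 1 \<le> int SS"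
  have "val t k < 2 ^ nat (hi t - lo t - 1)" by (rule val_lt[OF h])
  also have "(2::nat) ^ nat (hi t - lo t - 1) \<le> 2 ^ (SS - 1)" using h lo_le_hi[of t] by (intro power_increasing) auto
  finally show ?thesis .
qed

lemma val_le: "hi t - lo t + 1 \<le> int SS \<Longrightarrow> int (val t k) \<le> int (length w) + 1"
proof -
  assume h: "hi t - lo t + 1 \<le> int SS"
  have "val t k < 2 ^ (SS - 1)" by (rule val_lt2[OF h])
  moreover have "(2::nat) ^ (SS - 1) \<le> length w + 1" using SS_pos by (intro pw_le) auto
  ultimately show ?thesis by linarith
qed

lemma HH_pos: "0 < HH t"
  by (simp add: HH_def)

lemma HH_le: "hi t - lo t + 1 \<le> int SS \<Longrightarrow> int (HH t) \<le> int (length w) + 1"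
proof -
  assume h: "hi t - lo t + 1 \<le> int SS"
  show ?thesis
  proof (cases "jj t - lo t < 2")
    case True then show ?thesis by (simp add: HH_def)
  next
    case False
    then have "nat (jj t - lo t - 2) < SS" using h jj_in[of t] by linarith
    then have "(2::nat) ^ nat (jj t - lo t - 2) \<le> length w + 1" by (rule pw_le)
    then have "int ((2::nat) ^ nat (jj t - lo t - 2)) \<le> int (length w + 1)" by (simp only: of_nat_le_iff)
    then show ?thesis using False by (simp add: HH_def)
  qed
qed

lemma okp_Rep: "nohalt t \<Longrightarrow> okp w (posR (ii t) ov (int (HH t)) (val t))"
proof -
  assume nh: "nohalt t"
  have sp: "hi t - lo t + 1 \<le> int SS" by (rule nohalt_space[OF nh])
  show ?thesis
    using nohalt_state[OF nh] HH_le[OF sp] val_le[OF sp]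
    by (intro okp_posR) (auto simp: in_range_def)
qed

lemma Rep_CS: "Ctl Rd1 q a b (Lc t) ov 0 0 False ga gb dr \<in> CS"
  using c_pos by (auto simp: CS_def Lc_def nat_le_iff)

lemma win_read: "jj t - lo t < 2 \<Longrightarrow> (if Lc t = 0 then tt t (lo t) else tt t (lo t + 1)) = tt t (jj t)"
proof -
  assume h: "jj t - lo t < 2"
  then have "jj t = lo t \<or> jj t = lo t + 1" using jj_in[of t] by linarith
  then show ?thesis using h by (auto simp: Lc_def)
qed

lemma tr_bit:
  assumes "\<not> jj t - lo t < 2" "hi t - lo t + 1 \<le> int SS" "k < c"
  shows "odd (val t k div HH t) = bitk (tt t (jj t)) k"
proof -
  let ?d0 = "nat (jj t - lo t - 2)"
  have d0: "?d0 < SS" using assms jj_in[of t] by linarith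
  have "odd (val t k div HH t) = bitk (tt t (lo t + 2 + int ?d0)) k"
    unfolding val_def HH_def using assms(1) digsum_bit[OF d0] by simp
  moreover have "lo t + 2 + int ?d0 = jj t" using assms(1) by simp
  ultimately show ?thesis by simp
qed

lemma e_digsum: "digsum (\<lambda>k. bitk g k) c = e g"
  unfolding bitk_def by (rule digsum_bits[OF e_lt])

lemma tr_bs:
  assumes "\<not> jj t - lo t < 2" "hi t - lo t + 1 \<le> int SS"
  shows "decg (bs (val t) (HH t) c) = tt t (jj t)"
proof -
  have "bs (val t) (HH t) c = digsum (\<lambda>k. bitk (tt t (jj t)) k) c"
    unfolding bs_def digsum_def using tr_bit[OF assms] by (intro sum.cong) auto
  also have "\<dots> = e (tt t (jj t))" by (rule e_digsum)
  finally show ?thesis by (simp add: decg_def e_inj)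
qed

end

context simw
begin

lemma heads_ok_upd: "okp w p \<Longrightarrow> fa_heads_ok FA w (s, p(hI := v)) = in_range w v"
  by (auto simp: fa_heads_ok_def okp_def in_range_def hI_def)

lemma acc_iff: "x \<in> CS \<Longrightarrow> (to_nat x \<in> to_nat ` {x \<in> CS. ph x = Acc}) = (ph x = Acc)"
  by (auto simp: inj_image_mem_iff)

lemma rej_iff: "x \<in> CS \<Longrightarrow> (to_nat x \<in> to_nat ` {x \<in> CS. ph x = Rej}) = (ph x = Rej)"
  by (auto simp: inj_image_mem_iff)

lemma tm_next:
  assumes "dlt t = (q', di, g', dj)"
  shows "cf (Suc t) = (q', ii t + mv di, jj t + mv dj, (tt t)(jj t := g'))"
  using step_comp[of t] assms cf_eq[of "Suc t"] by simp

lemma decide_eq: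
  assumes "st x = qq t" "dlt t = (q', di, g', dj)"
  shows "decide x (tape_at w (ii t)) (tt t (jj t)) =
    (if q' \<in> tm_acc M then (Ctl Acc q' (w0 x) (w1 x) (loc x) (ori x) 0 0 False (tt t (jj t)) g' dj, stay(hI := di))
     else if q' \<in> tm_rej M then (Ctl Rej q' (w0 x) (w1 x) (loc x) (ori x) 0 0 False (tt t (jj t)) g' dj, stay(hI := di))
     else if loc x = 0 then
       (case dj of
          MStay \<Rightarrow> (Ctl Rd1 q' g' (w1 x) 0 (ori x) 0 0 False (tt t (jj t)) g' dj, stay(hI := di))
        | MRight \<Rightarrow> (Ctl Rd1 q' g' (w1 x) 1 (ori x) 0 0 False (tt t (jj t)) g' dj, stay(hI := di))
        | MLeft \<Rightarrow> (Ctl Lx1 q' (tm_blank M) g' 0 (ori x) 0 0 False (w1 x) g' dj, stay(hI := di)))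
     else if loc x = 1 then
       (case dj of
          MStay \<Rightarrow> (Ctl Rd1 q' (w0 x) g' 1 (ori x) 0 0 False (tt t (jj t)) g' dj, stay(hI := di))
        | MRight \<Rightarrow> (Ctl Rd1 q' (w0 x) g' 2 (ori x) 0 0 False (tt t (jj t)) g' dj, stay(hI := di))
        | MLeft \<Rightarrow> (Ctl Rd1 q' (w0 x) g' 0 (ori x) 0 0 False (tt t (jj t)) g' dj, stay(hI := di)))
     else (Ctl Wr q' (w0 x) (w1 x) (loc x) (ori x) 0 0 False (tt t (jj t)) g' dj, stay(hI := di)))"
  using assms by (simp add: decide_def dlt_def[symmetric])

lemma halt_case:
  assumes nh: "nohalt t" and hs: "tm_halted M w (cf (Suc t))" and x: "x \<in> CS" "st x = qq t"
    and ok: "okp w p" and pI: "p hI = ii t" and gp: "good p"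
    and dec: "decide x (tape_at w (ii t)) (tt t (jj t)) = (y, d)"
  shows "fa_halted FA w (to_nat y, upd p d) \<and> (fa_accepting FA w (to_nat y, upd p d) = tm_accepting M w (cf (Suc t)))"
proof -
  obtain q' di g' dj where dl: "dlt t = (q', di, g', dj)" by (cases "dlt t") auto
  have yCS: "y \<in> CS" using decide_CS[OF x(1), of "tape_at w (ii t)" "tt t (jj t)"] dec by simp
  have dd: "d = stay(hI := di)" using decide_eq[OF x(2) dl] dec by (auto split: if_splits move.splits)
  have up: "upd p d = p(hI := ii t + mv di)" using dd upd_upd upd_stay[OF gp] pI by simp
  have cfS: "cf (Suc t) = (q', ii t + mv di, jj t + mv dj, (tt t)(jj t := g'))" by (rule tm_next[OF dl])
  have hs': "q' \<in> tm_acc M \<or> q' \<in> tm_rej M \<or> \<not> in_range w (ii t + mv di)"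
    using hs cfS by (simp add: tm_halted_def)
  have ho: "fa_heads_ok FA w (to_nat y, upd p d) = in_range w (ii t + mv di)"
    using heads_ok_upd[OF ok] up by simp
  show ?thesis
  proof (cases "q' \<in> tm_acc M")
    case True
    then have "ph y = Acc" using decide_eq[OF x(2) dl] dec by auto
    then show ?thesis using ho yCS True cfS
      by (simp add: fa_halted_def fa_accepting_def tm_accepting_def acc_iff)
  next
    case nacc: False
    show ?thesis
    proof (cases "q' \<in> tm_rej M")
      case True
      then have "ph y = Rej" using decide_eq[OF x(2) dl] dec nacc by auto
      then show ?thesis using ho yCS True nacc cfS
        by (simp add: fa_halted_def fa_accepting_def tm_accepting_def acc_iff rej_iff)
    next
      case False
      then have "\<not> in_range w (ii t + mv di)" using hs' nacc by simp
      then show ?thesis using ho nacc cfS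
        by (simp add: fa_halted_def fa_accepting_def tm_accepting_def)
    qed
  qed
qed

lemma nh_next:
  assumes "nohalt t" "\<not> tm_halted M w (cf (Suc t))" "dlt t = (q', di, g', dj)"
  shows "q' \<notin> tm_acc M" "q' \<notin> tm_rej M" "in_range w (ii t + mv di)" "nohalt (Suc t)"
  using assms tm_next[OF assms(3)]
  by (auto simp: tm_halted_def nohalt_def le_Suc_eq)

lemma val_cong:
  assumes "lo t' = lo t" "\<And>d. d < SS \<Longrightarrow> tt t' (lo t + 2 + int d) = tt t (lo t + 2 + int d)"
  shows "val t' = val t"
  unfolding val_def digsum_def using assms by (intro ext sum.cong) auto

end

context simw
begin

definition post :: "nat \<Rightarrow> fa_conf \<Rightarrow> bool" where
  "post t C' \<longleftrightarrow> (if tm_halted M w (cf (Suc t)) then fa_halted FA w C' \<and> (fa_accepting FA w C' = tm_accepting M w (cf (Suc t)))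
                 else Rep (Suc t) C')"

lemma Rep_intro:
  "qq t' = q \<Longrightarrow> tt t' (lo t') = a \<Longrightarrow> tt t' (lo t' + 1) = b \<Longrightarrow> Lc t' = l \<Longrightarrow> HH t' = H \<Longrightarrow>
   ii t' = i \<Longrightarrow> val t' = vs \<Longrightarrow> Rep t' (to_nat (Ctl Rd1 q a b l ov 0 0 False ga gb dr), posR i ov (int H) vs)"
  unfolding Rep_def by blast

lemma RepE:
  assumes "Rep t C"
  obtains ov ga gb dr where "C = (to_nat (Ctl Rd1 (qq t) (tt t (lo t)) (tt t (lo t + 1)) (Lc t) ov 0 0 False ga gb dr),
                                  posR (ii t) ov (int (HH t)) (val t))"
  using assms unfolding Rep_def by blast

lemma macro_win:
  assumes nh: "nohalt t" and rep: "Rep t C" and win: "jj t - lo t < 2"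
    and nl: "\<not> (jj t = lo t \<and> snd (snd (snd (dlt t))) = MLeft)"
  shows "\<exists>C'. runs w C 1 C' \<and> post t C'"
proof -
  obtain ov ga gb dr where C: "C = (to_nat (Ctl Rd1 (qq t) (tt t (lo t)) (tt t (lo t + 1)) (Lc t) ov 0 0 False ga gb dr),
                                  posR (ii t) ov (int (HH t)) (val t))" using RepE[OF rep] by blast
  let ?x = "Ctl Rd1 (qq t) (tt t (lo t)) (tt t (lo t + 1)) (Lc t) ov 0 0 False ga gb dr"
  let ?p = "posR (ii t) ov (int (HH t)) (val t)"
  have L2: "Lc t < 2" using win by (simp add: Lc_def)
  have g: "(if ph ?x = Dec then decg (cd ?x) else if loc ?x = 0 then w0 ?x else w1 ?x) = tt t (jj t)"
    by (rule trans[OF _ win_read[OF win]]) simp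
  have ok: "okp w ?p" by (rule okp_Rep[OF nh])
  have R: "runs w (to_nat ?x, ?p) 1 (to_nat (fst (decide ?x (tape_at w (ii t)) (tt t (jj t)))),
                upd ?p (snd (decide ?x (tape_at w (ii t)) (tt t (jj t)))))"
    using dec_step[OF good_posR ok, of ?x] L2 g by simp
  obtain q' di g' dj where dl: "dlt t = (q', di, g', dj)" by (cases "dlt t") auto
  obtain y d where yd: "decide ?x (tape_at w (ii t)) (tt t (jj t)) = (y, d)" by fastforce
  have "post t (to_nat y, upd ?p d)"
  proof (cases "tm_halted M w (cf (Suc t))")
    case True
    then show ?thesis using halt_case[OF nh True Rep_CS _ ok _ good_posR yd] by (simp add: post_def)
  next
    case False
    note nn = nh_next[OF nh False dl]
    have cfS: "cf (Suc t) = (q', ii t + mv di, jj t + mv dj, (tt t)(jj t := g'))" by (rule tm_next[OF dl])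
    have comp: "qq (Suc t) = q'" "ii (Suc t) = ii t + mv di" "jj (Suc t) = jj t + mv dj" "tt (Suc t) = (tt t)(jj t := g')"
      using cfS cf_eq[of "Suc t"] by simp_all
    have dd: "d = stay(hI := di)" using decide_eq[of ?x t q' di g' dj] dl yd nn(1,2) by (auto split: if_splits move.splits)
    have up: "upd ?p d = posR (ii (Suc t)) ov (int (HH t)) (val t)"
      using dd comp(2) upd_upd upd_stay[OF good_posR] posR_I by simp
    have HH1: "HH t = 1" using win by (simp add: HH_def)
    have jjc: "jj t = lo t \<or> jj t = lo t + 1" using win jj_in[of t] by linarith
    have loS: "lo (Suc t) = lo t" if "lo t \<le> jj (Suc t)" using that by simp
    show ?thesis
    proof (cases "jj t = lo t")
      case J0: True
      then have Lc0: "Lc t = 0" by (simp add: Lc_def)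
      have djn: "dj \<noteq> MLeft" using nl J0 dl by auto
      show ?thesis
      proof (cases dj)
        case MLeft then show ?thesis using djn by simp
      next
        case MStay
        have y: "y = Ctl Rd1 q' g' (tt t (lo t + 1)) 0 ov 0 0 False (tt t (jj t)) g' dj"
          using decide_eq[of ?x t q' di g' dj] dl yd nn(1,2) Lc0 MStay by simp
        have lS: "lo (Suc t) = lo t" using comp(3) MStay J0 by simp
        have "Rep (Suc t) (to_nat y, upd ?p d)"
          unfolding y up unfolding HH1
        proof (rule Rep_intro)
          show "qq (Suc t) = q'" by (rule comp(1))
          show "tt (Suc t) (lo (Suc t)) = g'" using comp(4) lS J0 by simp
          show "tt (Suc t) (lo (Suc t) + 1) = tt t (lo t + 1)" using comp(4) lS J0 by simp
          show "Lc (Suc t) = 0" using comp(3) lS J0 MStay by (simp add: Lc_def)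
          show "HH (Suc t) = 1" using comp(3) lS J0 MStay by (simp add: HH_def)
          show "ii (Suc t) = ii (Suc t)" ..
          show "val (Suc t) = val t" by (rule val_cong) (use lS comp(4) J0 in auto)
        qed
        then show ?thesis using False by (simp add: post_def)
      next
        case MRight
        have y: "y = Ctl Rd1 q' g' (tt t (lo t + 1)) 1 ov 0 0 False (tt t (jj t)) g' dj"
          using decide_eq[of ?x t q' di g' dj] dl yd nn(1,2) Lc0 MRight by simp
        have lS: "lo (Suc t) = lo t" using comp(3) MRight J0 by simp
        have "Rep (Suc t) (to_nat y, upd ?p d)"
          unfolding y up unfolding HH1
        proof (rule Rep_intro)
          show "qq (Suc t) = q'" by (rule comp(1))
          show "tt (Suc t) (lo (Suc t)) = g'" using comp(4) lS J0 by simp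
          show "tt (Suc t) (lo (Suc t) + 1) = tt t (lo t + 1)" using comp(4) lS J0 by simp
          show "Lc (Suc t) = 1" using comp(3) lS J0 MRight by (simp add: Lc_def)
          show "HH (Suc t) = 1" using comp(3) lS J0 MRight by (simp add: HH_def)
          show "ii (Suc t) = ii (Suc t)" ..
          show "val (Suc t) = val t" by (rule val_cong) (use lS comp(4) J0 in auto)
        qed
        then show ?thesis using False by (simp add: post_def)
      qed
    next
      case J1': False
      then have J1: "jj t = lo t + 1" using jjc by simp
      then have Lc1: "Lc t = 1" by (simp add: Lc_def)
      have common: "tt (Suc t) (lo t) = tt t (lo t)" "tt (Suc t) (lo t + 1) = g'"
        "val (Suc t) = val t" if "lo (Suc t) = lo t"
      proof -
        show "tt (Suc t) (lo t) = tt t (lo t)" using comp(4) J1 by simp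
        show "tt (Suc t) (lo t + 1) = g'" using comp(4) J1 by simp
        show "val (Suc t) = val t" by (rule val_cong) (use that comp(4) J1 in auto)
      qed
      show ?thesis
      proof (cases dj)
        case MStay
        have y: "y = Ctl Rd1 q' (tt t (lo t)) g' 1 ov 0 0 False (tt t (jj t)) g' dj"
          using decide_eq[of ?x t q' di g' dj] dl yd nn(1,2) Lc1 MStay by simp
        have lS: "lo (Suc t) = lo t" using comp(3) MStay J1 by simp
        have "Rep (Suc t) (to_nat y, upd ?p d)"
          unfolding y up unfolding HH1
          by (rule Rep_intro) (use comp lS common[OF lS] J1 MStay in \<open>simp_all add: Lc_def HH_def\<close>)
        then show ?thesis using False by (simp add: post_def)
      next
        case MRight
        have y: "y = Ctl Rd1 q' (tt t (lo t)) g' 2 ov 0 0 False (tt t (jj t)) g' dj"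
          using decide_eq[of ?x t q' di g' dj] dl yd nn(1,2) Lc1 MRight by simp
        have lS: "lo (Suc t) = lo t" using comp(3) MRight J1 by simp
        have "Rep (Suc t) (to_nat y, upd ?p d)"
          unfolding y up unfolding HH1
          by (rule Rep_intro) (use comp lS common[OF lS] J1 MRight in \<open>simp_all add: Lc_def HH_def\<close>)
        then show ?thesis using False by (simp add: post_def)
      next
        case MLeft
        have y: "y = Ctl Rd1 q' (tt t (lo t)) g' 0 ov 0 0 False (tt t (jj t)) g' dj"
          using decide_eq[of ?x t q' di g' dj] dl yd nn(1,2) Lc1 MLeft by simp
        have lS: "lo (Suc t) = lo t" using comp(3) MLeft J1 by simp
        have "Rep (Suc t) (to_nat y, upd ?p d)"
          unfolding y up unfolding HH1
          by (rule Rep_intro) (use comp lS common[OF lS] J1 MLeft in \<open>simp_all add: Lc_def HH_def\<close>)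
        then show ?thesis using False by (simp add: post_def)
      qed
    qed
  qed
  then show ?thesis using R yd C by auto
qed

end

context simw
begin

definition B1 :: real where "B1 = (2 * real c + 3 / 2) * real (length w) + 2 * real c + 1"

lemma B1_nat: "4 * r \<le> (8 * c + 6) * length w + 8 * c + 4 \<Longrightarrow> real r \<le> B1"
proof -
  assume h: "4 * r \<le> (8 * c + 6) * length w + 8 * c + 4"
  then have "real (4 * r) \<le> real ((8 * c + 6) * length w + 8 * c + 4)" by (simp only: of_nat_le_iff)
  then show ?thesis unfolding B1_def by (simp add: algebra_simps)
qed

lemma SS_ge: "hi t - lo t + 1 \<le> int SS \<Longrightarrow> 2 ^ nat (hi t - lo t + 1) \<le> length w + 2"
proof -
  assume "hi t - lo t + 1 \<le> int SS"
  then have "(2::nat) ^ nat (hi t - lo t + 1) \<le> 2 ^ SS" by (intro power_increasing) auto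
  then show ?thesis using pow_SS by linarith
qed

lemma val_shift:
  assumes "jj t = lo t" "lo (Suc t) = lo t - 1" "tt (Suc t) = (tt t)(jj t := g')"
    "hi (Suc t) - lo (Suc t) + 1 \<le> int SS"
  shows "val (Suc t) k = 2 * val t k + bb (tt t (lo t + 1)) k"
proof -
  define f where "f d = bitk (tt t (lo t + 2 + int d)) k" for d
  have hiS: "hi t \<le> hi (Suc t)" by simp
  have SS2: "2 \<le> SS" using assms(2,4) jj_in[of "Suc t"] jj_in[of t] hiS assms(1) by linarith
  have nf: "\<not> f (SS - 1)"
  proof -
    have "hi t < lo t + 2 + int (SS - 1)" using assms(2,4) hiS SS2 by linarith
    then show ?thesis using tt_out[of "lo t + 2 + int (SS - 1)" t] bitk_blank by (simp add: f_def)
  qed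
  have e1: "(\<lambda>d. bitk (tt (Suc t) (lo (Suc t) + 2 + int d)) k) = (\<lambda>d. if d = 0 then bitk (tt t (lo t + 1)) k else f (d - 1))"
  proof (rule ext)
    fix d
    show "bitk (tt (Suc t) (lo (Suc t) + 2 + int d)) k = (if d = 0 then bitk (tt t (lo t + 1)) k else f (d - 1))"
    proof (cases d)
      case 0
      have e: "lo (Suc t) + 2 + int d = lo t + 1" using 0 assms(2) by simp
      show ?thesis unfolding e using assms(1,3) 0 by (simp del: lo.simps)
    next
      case (Suc d')
      have e: "lo (Suc t) + 2 + int d = lo t + 2 + int d'" using Suc assms(2) by simp
      have "lo t + 2 + int d' \<noteq> jj t" using assms(1) by simp
      then show ?thesis unfolding e using assms(3) Suc by (simp add: f_def del: lo.simps)
    qed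
  qed
  have "val (Suc t) k = digsum (\<lambda>d. if d = 0 then bitk (tt t (lo t + 1)) k else f (d - 1)) (Suc (SS - 1))"
    unfolding val_def e1 using SS2 by simp
  also have "\<dots> = 2 * digsum f (SS - 1) + (if bitk (tt t (lo t + 1)) k then 1 else 0)"
    by (rule digsum_shift[where f=f and D="SS - 1", OF nf])
  also have "digsum f (SS - 1) = val t k"
    unfolding val_def f_def[symmetric] using nf SS2 digsum_Suc[of f "SS - 1"] by simp
  finally show ?thesis by (simp add: bb_def)
qed

lemma val_write:
  assumes "\<not> jj t - lo t < 2" "lo (Suc t) = lo t" "tt (Suc t) = (tt t)(jj t := g')"
    "hi t - lo t + 1 \<le> int SS"
  shows "val (Suc t) k = wv (val t) (HH t) (tt t (jj t)) g' k"
proof -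
  let ?d0 = "nat (jj t - lo t - 2)"
  define f where "f d = bitk (tt t (lo t + 2 + int d)) k" for d
  define g where "g d = bitk (tt (Suc t) (lo t + 2 + int d)) k" for d
  have d0: "?d0 < SS" using assms(1,4) jj_in[of t] by linarith
  have jd: "lo t + 2 + int ?d0 = jj t" using assms(1) by simp
  have gf: "g d = f d" if "d \<noteq> ?d0" for d
  proof -
    have "lo t + 2 + int d \<noteq> jj t" using that jd by linarith
    then show ?thesis using assms(3) by (simp add: f_def g_def)
  qed
  have up: "digsum g SS + (if f ?d0 then 2 ^ ?d0 else 0) = digsum f SS + (if g ?d0 then 2 ^ ?d0 else 0)"
    by (rule digsum_upd[OF d0 gf])
  have f0: "f ?d0 = bitk (tt t (jj t)) k" using jd by (simp add: f_def)
  have g0: "g ?d0 = bitk g' k" using jd assms(3) by (simp add: g_def)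
  have vS: "val (Suc t) k = digsum g SS" unfolding val_def g_def using assms(2) by simp
  have vt: "val t k = digsum f SS" unfolding val_def f_def by simp
  have H: "HH t = 2 ^ ?d0" using assms(1) by (simp add: HH_def)
  show ?thesis using up f0 g0 vS vt H by (auto simp: wv_def)
qed

end

context simw
begin

lemma val_lt_gen: "hi t - lo t + 1 \<le> int SS \<Longrightarrow> hi t - lo t - 1 \<le> int D \<Longrightarrow> val t k < 2 ^ D"
proof -
  assume h: "hi t - lo t + 1 \<le> int SS" and d: "hi t - lo t - 1 \<le> int D"
  have "val t k < 2 ^ nat (hi t - lo t - 1)" by (rule val_lt[OF h])
  also have "nat (hi t - lo t - 1) \<le> D" using d by (simp add: nat_le_iff)
  then have "(2::nat) ^ nat (hi t - lo t - 1) \<le> 2 ^ D" by (rule power_increasing) simp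
  finally show ?thesis .
qed
lemma pow_int: "(2::int) ^ SS \<le> int (length w) + 2"
proof -
  have "int ((2::nat) ^ SS) \<le> int (length w + 2)" using pow_SS by (simp only: of_nat_le_iff)
  then show ?thesis by simp
qed

lemma sum_le_card: "(\<And>k. k < c \<Longrightarrow> f k \<le> (K::nat)) \<Longrightarrow> (\<Sum>k\<in>{0..<c}. f k) \<le> c * K"
proof -
  assume h: "\<And>k. k < c \<Longrightarrow> f k \<le> K"
  have "(\<Sum>k\<in>{0..<c}. f k) \<le> (\<Sum>k\<in>{0..<c}. K)" by (rule sum_mono) (use h in auto)
  then show ?thesis by simp
qed

lemma macro_lx:
  assumes nh: "nohalt t" and rep: "Rep t C" and J0: "jj t = lo t"
    and ml: "snd (snd (snd (dlt t))) = MLeft"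
  shows "\<exists>r C'. real r \<le> B1 \<and> runs w C r C' \<and> post t C'"
proof -
  obtain ov ga gb dr where C: "C = (to_nat (Ctl Rd1 (qq t) (tt t (lo t)) (tt t (lo t + 1)) (Lc t) ov 0 0 False ga gb dr),
                                  posR (ii t) ov (int (HH t)) (val t))" using RepE[OF rep] by blast
  let ?x = "Ctl Rd1 (qq t) (tt t (lo t)) (tt t (lo t + 1)) (Lc t) ov 0 0 False ga gb dr"
  let ?p = "posR (ii t) ov (int (HH t)) (val t)"
  have win: "jj t - lo t < 2" using J0 by simp
  have Lc0: "Lc t = 0" using J0 by (simp add: Lc_def)
  have HH1: "HH t = 1" using win by (simp add: HH_def)
  have g: "(if ph ?x = Dec then decg (cd ?x) else if loc ?x = 0 then w0 ?x else w1 ?x) = tt t (jj t)"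
    by (rule trans[OF _ win_read[OF win]]) simp
  have ok: "okp w ?p" by (rule okp_Rep[OF nh])
  have R: "runs w (to_nat ?x, ?p) 1 (to_nat (fst (decide ?x (tape_at w (ii t)) (tt t (jj t)))),
                upd ?p (snd (decide ?x (tape_at w (ii t)) (tt t (jj t)))))"
    using dec_step[OF good_posR ok, of ?x] Lc0 g by simp
  obtain q' di g' where dl: "dlt t = (q', di, g', MLeft)" using ml by (cases "dlt t") auto
  obtain y d where yd: "decide ?x (tape_at w (ii t)) (tt t (jj t)) = (y, d)" by fastforce
  have B1ge: "1 \<le> B1" unfolding B1_def by simp
  show ?thesis
  proof (cases "tm_halted M w (cf (Suc t))")
    case True
    then have "post t (to_nat y, upd ?p d)"
      using halt_case[OF nh True Rep_CS _ ok _ good_posR yd] by (simp add: post_def)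
    then show ?thesis using R yd C B1ge by (intro exI[of _ 1]) auto
  next
    case False
    note nn = nh_next[OF nh False dl]
    have cfS: "cf (Suc t) = (q', ii t + mv di, jj t + mv MLeft, (tt t)(jj t := g'))" by (rule tm_next[OF dl])
    have comp: "qq (Suc t) = q'" "ii (Suc t) = ii t + mv di" "jj (Suc t) = lo t - 1" "tt (Suc t) = (tt t)(jj t := g')"
      using cfS cf_eq[of "Suc t"] J0 by simp_all
    have lS: "lo (Suc t) = lo t - 1" using comp(3) by simp
    have spt: "hi t - lo t + 1 \<le> int SS" by (rule nohalt_space[OF nh])
    have spS: "hi (Suc t) - lo (Suc t) + 1 \<le> int SS" by (rule nohalt_space1[OF nh])
    have hiS: "hi t \<le> hi (Suc t)" by simp
    have y: "y = Ctl Lx1 q' (tm_blank M) g' 0 ov 0 0 False (tt t (lo t + 1)) g' MLeft"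
      using decide_eq[of ?x t q' di g' MLeft] dl yd nn(1,2) Lc0 by simp
    have dd: "d = stay(hI := di)" using decide_eq[of ?x t q' di g' MLeft] dl yd nn(1,2) Lc0 by simp
    have up: "upd ?p d = posR (ii (Suc t)) ov 1 (val t)"
      using dd comp(2) upd_upd upd_stay[OF good_posR] posR_I HH1 by simp
    have iiS: "0 \<le> ii (Suc t) \<and> ii (Suc t) \<le> int (length w) + 1" using nn(3) comp(2) by (simp add: in_range_def)
    have SS2: "2 \<le> SS" using spS lS hiS jj_in[of t] J0 lo_le_hi[of t] by linarith
    have vlt: "val t k < 2 ^ (SS - 2)" for k
      by (rule val_lt_gen[OF spt]) (use spS lS hiS SS2 in linarith)
    have p2: "2 * (2::nat) ^ (SS - 2) = 2 ^ (SS - 1)" using SS2 by (simp add: power_Suc[symmetric] Suc_diff_Suc numeral_2_eq_2)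
    have p1: "2 * (2::nat) ^ (SS - 1) = 2 ^ SS" using SS2 by (simp add: power_Suc[symmetric])
    have vb: "2 * val t k + 2 \<le> 2 ^ (SS - 1)" for k using vlt[of k] p2 by linarith
    have SSp0: "(2::nat) ^ (SS - 1) \<le> length w + 1" using SS_pos by (intro pw_le) auto
    let ?vs' = "\<lambda>k'. if 0 \<le> k' then 2 * val t k' + bb (tt t (lo t + 1)) k' else val t k'"
    have RL: "runs w (to_nat (Ctl Lx1 q' (tm_blank M) g' 0 ov 0 0 False (tt t (lo t + 1)) g' MLeft), posR (ii (Suc t)) ov 1 (val t))
           (\<Sum>k'\<in>{0..<c}. 4 * val t k' + bb (tt t (lo t + 1)) k' + 3)
           (to_nat (Ctl Rd1 q' (tm_blank M) g' 0 ov 0 0 False (tt t (lo t + 1)) g' MLeft), posR (ii (Suc t)) ov 1 ?vs')"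
    proof (rule lx_all)
      show "0 < c" by (rule c_pos)
      show "0 \<le> ii (Suc t)" "ii (Suc t) \<le> int (length w) + 1" using iiS by auto
      show "int (val t k) \<le> int (length w) + 1" if "k < c" for k by (rule val_le[OF spt])
      show "2 * int (val t k') + 1 \<le> int (length w) + 1" if "0 \<le> k'" "k' < c" for k'
      proof -
        have "2 * val t k' + 1 \<le> length w + 1" using vb[of k'] SSp0 by linarith
        then show ?thesis by linarith
      qed
    qed
    have vS: "val (Suc t) = ?vs'"
      using val_shift[OF J0 lS comp(4) spS] by (intro ext) simp
    have "Rep (Suc t) (to_nat (Ctl Rd1 q' (tm_blank M) g' 0 ov 0 0 False (tt t (lo t + 1)) g' MLeft), posR (ii (Suc t)) ov (int 1) ?vs')"
    proof (rule Rep_intro)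
      show "qq (Suc t) = q'" by (rule comp(1))
      show "tt (Suc t) (lo (Suc t)) = tm_blank M" using comp(4) lS J0 tt_out[of "lo t - 1" t] by simp
      show "tt (Suc t) (lo (Suc t) + 1) = g'" using comp(4) lS J0 by simp
      show "Lc (Suc t) = 0" using comp(3) lS by (simp add: Lc_def del: lo.simps)
      show "HH (Suc t) = 1" using comp(3) lS by (simp add: HH_def del: lo.simps)
      show "ii (Suc t) = ii (Suc t)" ..
      show "val (Suc t) = ?vs'" by (rule vS)
    qed
    then have post: "post t (to_nat (Ctl Rd1 q' (tm_blank M) g' 0 ov 0 0 False (tt t (lo t + 1)) g' MLeft), posR (ii (Suc t)) ov 1 ?vs')"
      using False by (simp add: post_def)
    have Rall: "runs w C (1 + (\<Sum>k'\<in>{0..<c}. 4 * val t k' + bb (tt t (lo t + 1)) k' + 3))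
           (to_nat (Ctl Rd1 q' (tm_blank M) g' 0 ov 0 0 False (tt t (lo t + 1)) g' MLeft), posR (ii (Suc t)) ov 1 ?vs')"
      using runs_trans[OF R[unfolded yd, simplified, unfolded y up] RL] C by simp
    have cost: "real (1 + (\<Sum>k'\<in>{0..<c}. 4 * val t k' + bb (tt t (lo t + 1)) k' + 3)) \<le> B1"
    proof (rule B1_nat)
      have n2: "2 \<le> length w"
      proof -
        have "(2::nat) ^ 2 \<le> 2 ^ SS" using SS2 by (intro power_increasing) auto
        then show ?thesis using pow_SS by simp
      qed
      have "4 * val t k + bb (tt t (lo t + 1)) k + 3 \<le> length w + 4" if "k < c" for k
      proof -
        have "4 * val t k + 4 \<le> 2 ^ SS" using vb[of k] p1 by linarith
        then have "4 * val t k + 4 \<le> length w + 2" using pow_SS by linarith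
        then show ?thesis by (simp add: bb_def)
      qed
      then have "(\<Sum>k'\<in>{0..<c}. 4 * val t k' + bb (tt t (lo t + 1)) k' + 3) \<le> c * (length w + 4)"
        by (rule sum_le_card)
      then have s: "(\<Sum>k'\<in>{0..<c}. 4 * val t k' + bb (tt t (lo t + 1)) k' + 3) \<le> c * length w + 4 * c"
        by (simp add: algebra_simps)
      have m: "2 * c \<le> c * length w" using n2 by simp
      have e: "(8 * c + 6) * length w + 8 * c + 4 = 8 * (c * length w) + 6 * length w + 8 * c + 4"
        by (simp add: algebra_simps)
      show "4 * (1 + (\<Sum>k'\<in>{0..<c}. 4 * val t k' + bb (tt t (lo t + 1)) k' + 3)) \<le> (8 * c + 6) * length w + 8 * c + 4"
      proof -
        define S where "S = (\<Sum>k'\<in>{0..<c}. 4 * val t k' + bb (tt t (lo t + 1)) k' + 3)"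
        define P where "P = c * length w"
        have "S \<le> P + 4 * c" "2 * c \<le> P" using s m by (simp_all add: S_def P_def)
        then have "4 * (1 + S) \<le> 8 * P + 6 * length w + 8 * c + 4" by presburger
        then show ?thesis unfolding e by (simp add: S_def P_def)
      qed
    qed
    show ?thesis using Rall post cost by blast
  qed
qed

end

context simw
begin

lemma tr_cost_arith:
  fixes rc wc :: "nat \<Rightarrow> nat" and X MC n :: nat
  assumes "\<And>k. k < c \<Longrightarrow> rc k + wc k \<le> 3 * X + 1" "MC \<le> X + 1" "4 * X \<le> n + 2" "6 \<le> n"
  shows "4 * ((\<Sum>k\<in>{0..<c}. rc k) + 1 + (\<Sum>k\<in>{0..<c}. wc k) + 1 + MC) \<le> (8 * c + 6) * n + 8 * c + 4"
proof -
  have "(\<Sum>k\<in>{0..<c}. rc k) + (\<Sum>k\<in>{0..<c}. wc k) = (\<Sum>k\<in>{0..<c}. rc k + wc k)" by (simp add: sum.distrib)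
  also have "\<dots> \<le> c * (3 * X + 1)" by (rule sum_le_card) (use assms(1) in auto)
  finally have s: "(\<Sum>k\<in>{0..<c}. rc k) + (\<Sum>k\<in>{0..<c}. wc k) \<le> 3 * (c * X) + c" by (simp add: algebra_simps)
  have p: "4 * (c * X) \<le> c * n + 2 * c"
  proof -
    have "c * (4 * X) \<le> c * (n + 2)" using assms(3) by (rule mult_le_mono2)
    then show ?thesis by (simp add: algebra_simps)
  qed
  have q: "6 * c \<le> c * n" using assms(4) by simp
  define S where "S = (\<Sum>k\<in>{0..<c}. rc k) + (\<Sum>k\<in>{0..<c}. wc k)"
  define P where "P = c * X"
  define Q where "Q = c * n"
  have "S \<le> 3 * P + c" "4 * P \<le> Q + 2 * c" "6 * c \<le> Q" using s p q by (simp_all add: S_def P_def Q_def)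
  then have "4 * (S + 2 + MC) \<le> 8 * Q + 6 * n + 8 * c + 4"
  proof -
    assume a: "S \<le> 3 * P + c" "4 * P \<le> Q + 2 * c" "6 * c \<le> Q"
    have "4 * S \<le> 12 * P + 4 * c" using a(1) by simp
    also have "12 * P \<le> 3 * Q + 6 * c" using a(2) by simp
    finally have b: "4 * S \<le> 3 * Q + 10 * c" by simp
    have d: "4 * MC \<le> n + 6" using assms(2,3) by simp
    show ?thesis using b d a(3) assms(4) by simp
  qed
  moreover have "(8 * c + 6) * n + 8 * c + 4 = 8 * Q + 6 * n + 8 * c + 4" by (simp add: Q_def algebra_simps)
  ultimately show ?thesis by (simp add: S_def)
qed

end

context simw
begin

lemma macro_tr:
  assumes nh: "nohalt t" and rep: "Rep t C" and tr: "\<not> jj t - lo t < 2"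
  shows "\<exists>r C'. real r \<le> B1 \<and> runs w C r C' \<and> post t C'"
proof -
  obtain ov ga gb dr where C: "C = (to_nat (Ctl Rd1 (qq t) (tt t (lo t)) (tt t (lo t + 1)) (Lc t) ov 0 0 False ga gb dr),
                                  posR (ii t) ov (int (HH t)) (val t))" using RepE[OF rep] by blast
  have Lc2: "Lc t = 2" using tr by (simp add: Lc_def)
  define H where "H = HH t"
  define d0 where "d0 = nat (jj t - lo t - 2)"
  define a where "a = tt t (lo t)"
  define b where "b = tt t (lo t + 1)"
  define g where "g = tt t (jj t)"
  have Hd: "H = 2 ^ d0" using tr by (simp add: H_def HH_def d0_def)
  have H0: "0 < H" by (simp add: H_def HH_pos)
  have spt: "hi t - lo t + 1 \<le> int SS" by (rule nohalt_space[OF nh])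
  have spS: "hi (Suc t) - lo (Suc t) + 1 \<le> int SS" by (rule nohalt_space1[OF nh])
  have okt: "okp w (posR (ii t) ov (int H) (val t))" unfolding H_def by (rule okp_Rep[OF nh])
  have iit: "0 \<le> ii t \<and> ii t \<le> int (length w) + 1" using nohalt_state[OF nh] by (simp add: in_range_def)
  have Hb: "int H \<le> int (length w) + 1" unfolding H_def by (rule HH_le[OF spt])
  have vb: "\<And>k. k < c \<Longrightarrow> int (val t k) \<le> int (length w) + 1" by (rule val_le[OF spt])
  have SS3: "3 \<le> SS" using spt tr jj_in[of t] by linarith
  have n6: "6 \<le> length w"
  proof -
    have "(2::nat) ^ 3 \<le> 2 ^ SS" using SS3 by (intro power_increasing) auto
    then show ?thesis using pow_SS by simp
  qed
  define X where "X = (2::nat) ^ (SS - 2)"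
  have X4: "4 * X \<le> length w + 2"
  proof -
    have e: "SS = 2 + (SS - 2)" using SS3 by simp
    have "(2::nat) ^ SS = 2 ^ 2 * 2 ^ (SS - 2)" by (subst e) (simp only: power_add)
    then have "4 * X = 2 ^ SS" unfolding X_def by simp
    then show ?thesis using pow_SS by simp
  qed
  have vX: "val t k < X" for k unfolding X_def by (rule val_lt_gen[OF spt]) (use spt SS3 in linarith)
  have HX: "2 * H \<le> X"
  proof -
    have "d0 + 1 \<le> SS - 2" using spt jj_in[of t] tr SS3 unfolding d0_def by linarith
    then have "(2::nat) ^ (d0 + 1) \<le> 2 ^ (SS - 2)" by (intro power_increasing) auto
    then show ?thesis unfolding Hd X_def by simp
  qed
  obtain ov1 where R1: "runs w (to_nat (Ctl Rd1 (qq t) a b 2 ov 0 (bs (val t) H 0) False ga gb dr), posR (ii t) ov (int H) (val t))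
           (\<Sum>k'\<in>{0..<c}. 2 * val t k' + val t k' mod H + 3)
           (to_nat (Ctl Dec (qq t) a b 2 ov1 0 (bs (val t) H c) False ga gb dr), posR (ii t) ov1 (int H) (val t))"
    using read_all[where k=0 and H=H and i="ii t" and vs="val t" and q="qq t" and a=a and b=b and ov=ov and ga=ga and gb=gb and dr=dr and w=w]
      c_pos H0 iit Hb vb by auto
  have bs0: "bs (val t) H 0 = 0" by (simp add: bs_def)
  let ?x1 = "Ctl Dec (qq t) a b 2 ov1 0 (bs (val t) H c) False ga gb dr"
  let ?p1 = "posR (ii t) ov1 (int H) (val t)"
  have x1CS: "?x1 \<in> CS" using bs_lt[of "val t" H c] by (simp add: CS_def)
  have ok1: "okp w ?p1" using iit Hb vb by (intro okp_posR) auto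
  have gdec: "decg (bs (val t) H c) = g" unfolding g_def H_def by (rule tr_bs[OF tr spt])
  have R2: "runs w (to_nat ?x1, ?p1) 1 (to_nat (fst (decide ?x1 (tape_at w (ii t)) g)), upd ?p1 (snd (decide ?x1 (tape_at w (ii t)) g)))"
    using dec_step[OF good_posR ok1, of ?x1] gdec by simp
  have R12: "runs w C (Suc ((\<Sum>k'\<in>{0..<c}. 2 * val t k' + val t k' mod H + 3)))
       (to_nat (fst (decide ?x1 (tape_at w (ii t)) g)), upd ?p1 (snd (decide ?x1 (tape_at w (ii t)) g)))"
    using runs_trans[OF R1 R2] C Lc2 bs0 by (simp add: H_def a_def b_def)
  obtain q' di g' dj where dl: "dlt t = (q', di, g', dj)" by (cases "dlt t") auto
  obtain y d where yd: "decide ?x1 (tape_at w (ii t)) g = (y, d)" by fastforce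
  have rcb: "2 * val t k + val t k mod H + 3 \<le> 2 * X + H" for k
  proof -
    have "val t k mod H < H" using H0 by simp
    then show ?thesis using vX[of k] by linarith
  qed
  have wcb: "wcost H g g' k \<le> H + 1" for k by (simp add: wcost_def)
  show ?thesis
  proof (cases "tm_halted M w (cf (Suc t))")
    case True
    have "post t (to_nat y, upd ?p1 d)"
      using halt_case[OF nh True x1CS _ ok1 _ good_posR, of y d] yd g_def True by (simp add: post_def)
    moreover have "real (Suc ((\<Sum>k'\<in>{0..<c}. 2 * val t k' + val t k' mod H + 3))) \<le> B1"
    proof (rule B1_nat)
      have "4 * ((\<Sum>k\<in>{0..<c}. 2 * val t k + val t k mod H + 3) + 1 + (\<Sum>k\<in>{0..<c}. 0) + 1 + 0) \<le> (8 * c + 6) * length w + 8 * c + 4"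
      proof (rule tr_cost_arith[where X=X])
        show "2 * val t k + val t k mod H + 3 + 0 \<le> 3 * X + 1" for k using rcb[of k] HX by linarith
      qed (use X4 n6 in auto)
      then show "4 * Suc (\<Sum>k'\<in>{0..<c}. 2 * val t k' + val t k' mod H + 3) \<le> (8 * c + 6) * length w + 8 * c + 4" by simp
    qed
    moreover have "runs w C (Suc ((\<Sum>k'\<in>{0..<c}. 2 * val t k' + val t k' mod H + 3))) (to_nat y, upd ?p1 d)"
      using R12 yd by simp
    ultimately show ?thesis by blast
  next
    case False
    note nn = nh_next[OF nh False dl]
    have cfS: "cf (Suc t) = (q', ii t + mv di, jj t + mv dj, (tt t)(jj t := g'))" by (rule tm_next[OF dl])
    have comp: "qq (Suc t) = q'" "ii (Suc t) = ii t + mv di" "jj (Suc t) = jj t + mv dj" "tt (Suc t) = (tt t)(jj t := g')"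
      using cfS cf_eq[of "Suc t"] by simp_all
    have lS: "lo (Suc t) = lo t"
      using comp(3) tr jj_in[of t] mv_bound[of dj] by simp
    have y: "y = Ctl Wr q' a b 2 ov1 0 0 False g g' dj"
      using decide_eq[of ?x1 t q' di g' dj] dl yd nn(1,2) g_def by simp
    have dd: "d = stay(hI := di)" using decide_eq[of ?x1 t q' di g' dj] dl yd nn(1,2) g_def by simp
    have up: "upd ?p1 d = posR (ii (Suc t)) ov1 (int H) (val t)"
      using dd comp(2) upd_upd upd_stay[OF good_posR] posR_I by simp
    have iiS: "0 \<le> ii (Suc t) \<and> ii (Suc t) \<le> int (length w) + 1" using nn(3) comp(2) by (simp add: in_range_def)
    have vW: "val (Suc t) k = wv (val t) H g g' k" for k
      unfolding H_def g_def by (rule val_write[OF tr lS comp(4) spt])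
    obtain ov2 where R3: "runs w (to_nat (Ctl Wr q' a b 2 ov1 0 0 False g g' dj), posR (ii (Suc t)) ov1 (int H) (val t))
           (\<Sum>k'\<in>{0..<c}. wcost H g g' k')
           (to_nat (Ctl Wr q' a b 2 ov2 c 0 False g g' dj), posR (ii (Suc t)) ov2 (int H) (\<lambda>k'. if 0 \<le> k' then wv (val t) H g g' k' else val t k'))"
    proof -
      have "\<exists>ov'. runs w (to_nat (Ctl Wr q' a b 2 ov1 0 0 False g g' dj), posR (ii (Suc t)) ov1 (int H) (val t))
           (\<Sum>k'\<in>{0..<c}. wcost H g g' k')
           (to_nat (Ctl Wr q' a b 2 ov' c 0 False g g' dj), posR (ii (Suc t)) ov' (int H) (\<lambda>k'. if 0 \<le> k' then wv (val t) H g g' k' else val t k'))"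
      proof (rule write_all)
        show "0 \<le> c" "0 < H" "0 \<le> ii (Suc t)" "ii (Suc t) \<le> int (length w) + 1" "int H \<le> int (length w) + 1"
          using H0 iiS Hb by auto
        show "int (val t k) \<le> int (length w) + 1" if "k < c" for k using vb that .
        show "int (wv (val t) H g g' k') \<le> int (length w) + 1" if "0 \<le> k'" "k' < c" for k'
          using val_le[OF spS, of k'] vW[of k'] by simp
        show "H \<le> val t k'" if "0 \<le> k'" "k' < c" "bitk g k' \<noteq> bitk g' k'" "\<not> bitk g' k'" for k'
        proof -
          have "odd (val t k' div H)" using tr_bit[OF tr spt that(2)] that(3,4) g_def H_def by simp
          then have "val t k' div H \<noteq> 0" by (metis even_zero)
          then show ?thesis by (simp add: div_eq_0_iff H0 not_less)
        qed
      qed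
      then show ?thesis using that by blast
    qed
    have vS: "(\<lambda>k'. if 0 \<le> k' then wv (val t) H g g' k' else val t k') = val (Suc t)"
      using vW by (intro ext) simp
    have okS: "okp w (posR (ii (Suc t)) ov2 (int H) (val (Suc t)))"
      using iiS Hb val_le[OF spS] by (intro okp_posR) auto
    have R4: "runs w (to_nat (Ctl Wr q' a b 2 ov2 c 0 False g g' dj), posR (ii (Suc t)) ov2 (int H) (val (Suc t))) 1
                (to_nat (case dj of MStay \<Rightarrow> Ctl Rd1 q' a b 2 ov2 0 0 False g g' dj
                   | MRight \<Rightarrow> Ctl Dbl q' a b 2 ov2 c 0 False g g' dj
                   | MLeft \<Rightarrow> Ctl Hlv q' a b 2 ov2 c 0 False g g' dj), posR (ii (Suc t)) ov2 (int H) (val (Suc t)))"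
      by (rule wr_disp[OF good_posR okS]) simp
    have R1234: "runs w C (Suc ((\<Sum>k'\<in>{0..<c}. 2 * val t k' + val t k' mod H + 3)) + (\<Sum>k'\<in>{0..<c}. wcost H g g' k') + 1)
                (to_nat (case dj of MStay \<Rightarrow> Ctl Rd1 q' a b 2 ov2 0 0 False g g' dj
                   | MRight \<Rightarrow> Ctl Dbl q' a b 2 ov2 c 0 False g g' dj
                   | MLeft \<Rightarrow> Ctl Hlv q' a b 2 ov2 c 0 False g g' dj), posR (ii (Suc t)) ov2 (int H) (val (Suc t)))"
      using runs_trans[OF runs_trans[OF R12[unfolded yd fst_conv snd_conv y up] R3[unfolded vS]] R4] .
    have hiS: "hi t \<le> hi (Suc t)" by simp
    have comm: "qq (Suc t) = q'" "tt (Suc t) (lo (Suc t)) = a" "tt (Suc t) (lo (Suc t) + 1) = b"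
      using comp(1,4) lS tr unfolding a_def b_def by auto
    let ?RC = "Suc ((\<Sum>k'\<in>{0..<c}. 2 * val t k' + val t k' mod H + 3)) + (\<Sum>k'\<in>{0..<c}. wcost H g g' k') + 1"
    have costgen: "real (?RC + MC) \<le> B1" if "MC \<le> X + 1" for MC
    proof (rule B1_nat)
      have "4 * ((\<Sum>k\<in>{0..<c}. 2 * val t k + val t k mod H + 3) + 1 + (\<Sum>k\<in>{0..<c}. wcost H g g' k) + 1 + MC) \<le> (8 * c + 6) * length w + 8 * c + 4"
      proof (rule tr_cost_arith[where X=X])
        show "2 * val t k + val t k mod H + 3 + wcost H g g' k \<le> 3 * X + 1" for k
          using rcb[of k] wcb[of k] HX by linarith
      qed (use that X4 n6 in auto)
      then show "4 * (?RC + MC) \<le> (8 * c + 6) * length w + 8 * c + 4" by simp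
    qed
    show ?thesis
    proof (cases dj)
      case MStay
      have "Rep (Suc t) (to_nat (Ctl Rd1 q' a b 2 ov2 0 0 False g g' dj), posR (ii (Suc t)) ov2 (int H) (val (Suc t)))"
      proof (rule Rep_intro[OF comm])
        show "Lc (Suc t) = 2" using comp(3) MStay lS tr by (simp add: Lc_def del: lo.simps)
        show "HH (Suc t) = H" using comp(3) MStay lS tr by (simp add: HH_def H_def del: lo.simps)
      qed simp_all
      then have "post t (to_nat (Ctl Rd1 q' a b 2 ov2 0 0 False g g' dj), posR (ii (Suc t)) ov2 (int H) (val (Suc t)))"
        using False by (simp add: post_def)
      moreover have "real (?RC + 0) \<le> B1" by (rule costgen) simp
      ultimately show ?thesis using R1234 MStay by (intro exI[of _ "?RC + 0"]) auto
    next
      case MRight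
      have d2: "2 * int H \<le> int (length w) + 1"
      proof -
        have "int (2 * H) \<le> int X" using HX by simp
        moreover have "int X \<le> int (length w) + 1" using X4 by linarith
        ultimately show ?thesis by simp
      qed
      have R5: "runs w (to_nat (Ctl Dbl q' a b 2 ov2 c 0 False g g' dj), posR (ii (Suc t)) ov2 (int H) (val (Suc t))) (2 * H + 1)
                (to_nat (Ctl Rd1 q' a b 2 (\<not> ov2) 0 0 False g g' dj), posR (ii (Suc t)) (\<not> ov2) (int (2 * H)) (val (Suc t)))"
        by (rule dbl_posR[OF okS H0 d2])
      have "Rep (Suc t) (to_nat (Ctl Rd1 q' a b 2 (\<not> ov2) 0 0 False g g' dj), posR (ii (Suc t)) (\<not> ov2) (int (2 * H)) (val (Suc t)))"
      proof (rule Rep_intro[OF comm])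
        show "Lc (Suc t) = 2" using comp(3) MRight lS tr by (simp add: Lc_def del: lo.simps)
        have "nat (jj t + 1 - lo t - 2) = Suc d0" using tr unfolding d0_def by linarith
        then show "HH (Suc t) = 2 * H" using comp(3) MRight lS tr Hd by (simp add: HH_def del: lo.simps)
      qed simp_all
      then have "post t (to_nat (Ctl Rd1 q' a b 2 (\<not> ov2) 0 0 False g g' dj), posR (ii (Suc t)) (\<not> ov2) (int (2 * H)) (val (Suc t)))"
        using False by (simp add: post_def)
      moreover have "real (?RC + (2 * H + 1)) \<le> B1" by (rule costgen) (use HX in simp)
      ultimately show ?thesis using runs_trans[OF R1234[unfolded MRight move.case, folded MRight] R5] by blast
    next
      case MLeft
      have Hp: "H = 1 \<or> even H" using Hd by (cases d0) auto
      have R5: "runs w (to_nat (Ctl Hlv q' a b 2 ov2 c 0 False g g' dj), posR (ii (Suc t)) ov2 (int H) (val (Suc t))) (H + 1)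
                (if H = 1 then (to_nat (Ctl Rd1 q' a b 1 ov2 0 0 False g g' dj), posR (ii (Suc t)) ov2 (int H) (val (Suc t)))
                 else (to_nat (Ctl Rd1 q' a b 2 (\<not> ov2) 0 0 False g g' dj), posR (ii (Suc t)) (\<not> ov2) (int (H div 2)) (val (Suc t))))"
        by (rule hlv_posR[OF okS H0 Hp])
      have cst: "real (?RC + (H + 1)) \<le> B1" by (rule costgen) (use HX in simp)
      show ?thesis
      proof (cases "H = 1")
        case True
        then have d00: "d0 = 0" using Hd by (cases d0) auto
        then have jl: "jj t = lo t + 2" using tr unfolding d0_def by linarith
        have "Rep (Suc t) (to_nat (Ctl Rd1 q' a b 1 ov2 0 0 False g g' dj), posR (ii (Suc t)) ov2 (int H) (val (Suc t)))"
        proof (rule Rep_intro[OF comm])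
          show "Lc (Suc t) = 1" using comp(3) MLeft lS jl by (simp add: Lc_def del: lo.simps)
          show "HH (Suc t) = H" using comp(3) MLeft lS jl True by (simp add: HH_def del: lo.simps)
        qed simp_all
        then have "post t (to_nat (Ctl Rd1 q' a b 1 ov2 0 0 False g g' dj), posR (ii (Suc t)) ov2 (int H) (val (Suc t)))"
          using False by (simp add: post_def)
        then show ?thesis using runs_trans[OF R1234[unfolded MLeft move.case, folded MLeft] R5[unfolded if_P[OF True]]] cst by blast
      next
        case nH1: False
        then have d0p: "0 < d0" using Hd by (cases d0) auto
        then have jl: "lo t + 3 \<le> jj t" using tr unfolding d0_def by linarith
        have "Rep (Suc t) (to_nat (Ctl Rd1 q' a b 2 (\<not> ov2) 0 0 False g g' dj), posR (ii (Suc t)) (\<not> ov2) (int (H div 2)) (val (Suc t)))"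
        proof (rule Rep_intro[OF comm])
          show "Lc (Suc t) = 2" using comp(3) MLeft lS jl by (simp add: Lc_def del: lo.simps)
          have "nat (jj t - 1 - lo t - 2) = d0 - 1" using jl unfolding d0_def by linarith
          moreover have "(2::nat) ^ (d0 - 1) = 2 ^ d0 div 2" using d0p by (cases d0) auto
          ultimately show "HH (Suc t) = H div 2" using comp(3) MLeft lS jl Hd by (simp add: HH_def del: lo.simps)
        qed simp_all
        then have "post t (to_nat (Ctl Rd1 q' a b 2 (\<not> ov2) 0 0 False g g' dj), posR (ii (Suc t)) (\<not> ov2) (int (H div 2)) (val (Suc t)))"
          using False by (simp add: post_def)
        then show ?thesis using runs_trans[OF R1234[unfolded MLeft move.case, folded MLeft] R5[unfolded if_not_P[OF nH1]]] cst by blast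
      qed
    qed
  qed
qed

end

context simw
begin

lemma B1_ge1: "1 \<le> B1"
  unfolding B1_def by simp

lemma macro:
  assumes "nohalt t" "Rep t C"
  shows "\<exists>r C'. real r \<le> B1 \<and> runs w C r C' \<and> post t C'"
proof (cases "jj t - lo t < 2")
  case True
  show ?thesis
  proof (cases "jj t = lo t \<and> snd (snd (snd (dlt t))) = MLeft")
    case True
    then show ?thesis using macro_lx[OF assms] by blast
  next
    case False
    then obtain C' where "runs w C 1 C'" "post t C'" using macro_win[OF assms \<open>jj t - lo t < 2\<close>] by blast
    moreover have "real (1::nat) \<le> B1" using B1_ge1 by simp
    ultimately show ?thesis by blast
  qed
next
  case False
  then show ?thesis using macro_tr[OF assms] by blast
qed

lemma val0: "val 0 = (\<lambda>_. 0)"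
  by (intro ext) (simp add: val_def digsum_def init_comp bitk_blank)

lemma init_run:
  assumes "nohalt 0"
  shows "\<exists>C. runs w (fa_init FA) 1 C \<and> Rep 0 C"
proof -
  have st: "tm_start M \<notin> tm_acc M" "tm_start M \<notin> tm_rej M"
    using nohalt_state[OF assms] init_comp by auto
  then have x0: "x0 = Ctl Init (tm_start M) (tm_blank M) (tm_blank M) 0 True 0 0 False (tm_blank M) (tm_blank M) MStay"
    by (simp add: x0_def)
  have gd: "good (\<lambda>_. 0)" by (simp add: good_def)
  have ok: "okp w (\<lambda>_. 0)" by (simp add: okp_def)
  have R: "runs w (to_nat x0, \<lambda>_. 0) 1 (to_nat (Ctl Rd1 (tm_start M) (tm_blank M) (tm_blank M) 0 True 0 0 False (tm_blank M) (tm_blank M) MStay), (\<lambda>_. 0)(hh True := 1))"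
    unfolding x0 by (rule init_step[OF gd ok]) simp
  have p: "(\<lambda>_. 0)(hh True := 1) = posR (ii 0) True (int (HH 0)) (val 0)"
    by (auto simp: posR_def init_comp HH_def val0 hdefs intro!: ext)
  have "Rep 0 (to_nat (Ctl Rd1 (tm_start M) (tm_blank M) (tm_blank M) 0 True 0 0 False (tm_blank M) (tm_blank M) MStay), posR (ii 0) True (int (HH 0)) (val 0))"
    by (rule Rep_intro) (simp_all add: init_comp Lc_def)
  then show ?thesis using R p by (auto simp: fa_init_def)
qed

lemma sim_run:
  assumes "nohalt t"
  shows "\<exists>\<tau> C. real \<tau> \<le> 1 + real t * B1 \<and> runs w (fa_init FA) \<tau> C \<and> Rep t C"
  using assms
proof (induction t)
  case 0
  then show ?case using init_run by fastforce
next
  case (Suc t)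
  have nt: "nohalt t" using Suc.prems by (simp add: nohalt_def)
  have nS: "\<not> tm_halted M w (cf (Suc t))" using Suc.prems by (simp add: nohalt_def)
  obtain \<tau> C where IH: "real \<tau> \<le> 1 + real t * B1" "runs w (fa_init FA) \<tau> C" "Rep t C" using Suc.IH[OF nt] by blast
  obtain r C' where M: "real r \<le> B1" "runs w C r C'" "post t C'" using macro[OF nt IH(3)] by blast
  have "Rep (Suc t) C'" using M(3) nS by (simp add: post_def)
  moreover have "runs w (fa_init FA) (\<tau> + r) C'" by (rule runs_trans[OF IH(2) M(2)])
  moreover have "real (\<tau> + r) \<le> 1 + real (Suc t) * B1" using IH(1) M(1) by (simp add: algebra_simps)
  ultimately show ?case by blast
qed

lemma fa_conf_runs: "runs w (fa_init FA) n C \<Longrightarrow> fa_conf_at FA w n = C \<and> (\<forall>j<n. \<not> fa_halted FA w (fa_conf_at FA w j))"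
  by (simp add: runs_def fa_conf_at_def)

lemma fa_first_unique: "fa_first_halt A w' m1 \<Longrightarrow> fa_first_halt A w' m2 \<Longrightarrow> m1 = m2"
  unfolding fa_first_halt_def by (metis linorder_neqE_nat)

lemma tm_first_unique: "tm_first_halt M' w' m1 \<Longrightarrow> tm_first_halt M' w' m2 \<Longrightarrow> m1 = m2"
  unfolding tm_first_halt_def by (metis linorder_neqE_nat)

lemma main_w:
  assumes "tm_halts_within M w T"
  shows "fa_halts_within FA w (T * (B1 + 1)) \<and> (fa_accepts FA w = tm_accepts M w)"
proof -
  obtain m' where m': "real m' \<le> T" "tm_halted M w (tm_conf_at M w m')" using assms by (auto simp: tm_halts_within_def)
  define m where "m = (LEAST m. tm_halted M w (cf m))"
  have hm: "tm_halted M w (cf m)" unfolding m_def by (rule LeastI[of _ m']) (use m'(2) in \<open>simp add: cf_def\<close>)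
  have mm: "m \<le> m'" unfolding m_def by (rule Least_le) (use m'(2) in \<open>simp add: cf_def\<close>)
  have bef: "\<not> tm_halted M w (cf j)" if "j < m" for j using that not_less_Least unfolding m_def by blast
  have tfh: "tm_first_halt M w m" using hm bef by (simp add: tm_first_halt_def cf_def)
  have tacc: "tm_accepts M w = tm_accepting M w (cf m)"
    using tfh tm_first_unique unfolding tm_accepts_def cf_def by blast
  have Bpos: "0 \<le> B1 + 1" using B1_ge1 by simp
  have T0: "0 \<le> T" using m'(1) by (meson of_nat_0_le_iff order_trans)
  obtain \<tau> C where fin: "real \<tau> \<le> real m * (B1 + 1)" "runs w (fa_init FA) \<tau> C"
    "fa_halted FA w C" "fa_accepting FA w C = tm_accepting M w (cf m)"
  proof (cases m)
    case 0
    have st: "tm_start M \<in> tm_acc M \<or> tm_start M \<in> tm_rej M"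
      using hm 0 init_comp cf_eq[of 0] by (auto simp: tm_halted_def in_range_def)
    have x0CS: "x0 \<in> CS" by (rule x0_CS)
    have okh: "fa_heads_ok FA w (to_nat x0, \<lambda>_. 0)" by (simp add: fa_heads_ok_def in_range_def)
    have "fa_halted FA w (to_nat x0, \<lambda>_. 0)"
      using st x0CS by (auto simp: fa_halted_def x0_def acc_iff rej_iff)
    moreover have "fa_accepting FA w (to_nat x0, \<lambda>_. 0) = tm_accepting M w (cf m)"
      using st x0CS okh 0 cf_eq[of 0] init_comp
      by (auto simp: fa_accepting_def tm_accepting_def x0_def acc_iff in_range_def)
    ultimately show ?thesis using that[of 0 "fa_init FA"] 0 by (simp add: fa_init_def)
  next
    case (Suc m1)
    have nh: "nohalt m1" using bef Suc by (auto simp: nohalt_def)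
    obtain \<tau> C where S: "real \<tau> \<le> 1 + real m1 * B1" "runs w (fa_init FA) \<tau> C" "Rep m1 C"
      using sim_run[OF nh] by blast
    obtain r C' where M: "real r \<le> B1" "runs w C r C'" "post m1 C'" using macro[OF nh S(3)] by blast
    have hS: "tm_halted M w (cf (Suc m1))" using hm Suc by simp
    have "real (\<tau> + r) \<le> real m * (B1 + 1)" using S(1) M(1) Suc by (simp add: algebra_simps)
    then show ?thesis using that[of "\<tau> + r" C'] runs_trans[OF S(2) M(2)] M(3) hS Suc by (simp add: post_def)
  qed
  have fc: "fa_conf_at FA w \<tau> = C" "\<forall>j<\<tau>. \<not> fa_halted FA w (fa_conf_at FA w j)" using fa_conf_runs[OF fin(2)] by auto
  have ffh: "fa_first_halt FA w \<tau>" using fc fin(3) by (simp add: fa_first_halt_def)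
  have facc: "fa_accepts FA w = fa_accepting FA w C"
    using ffh fa_first_unique fc unfolding fa_accepts_def by blast
  have "real \<tau> \<le> T * (B1 + 1)"
  proof -
    have "real m \<le> T" using mm m'(1) by linarith
    then have "real m * (B1 + 1) \<le> T * (B1 + 1)" using Bpos by (rule mult_right_mono)
    then show ?thesis using fin(1) by linarith
  qed
  then have "fa_halts_within FA w (T * (B1 + 1))" using fc fin(3) by (auto simp: fa_halts_within_def)
  then show ?thesis using facc fin(4) tacc by simp
qed

end

lemma enc_exists:
  fixes bl :: "'g::finite"
  assumes "card (UNIV :: 'g set) \<le> 2 ^ c"
  shows "\<exists>e :: 'g \<Rightarrow> nat. inj e \<and> e bl = 0 \<and> (\<forall>g. e g < 2 ^ c)"
proof -
  obtain f where f: "bij_betw f (UNIV :: 'g set) {0..<card (UNIV :: 'g set)}"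
    using ex_bij_betw_finite_nat[of "UNIV :: 'g set"] by auto
  have fi: "inj f" using f by (simp add: bij_betw_def)
  have fl: "f g < card (UNIV :: 'g set)" for g using f by (auto simp: bij_betw_def)
  define e where "e g = (if f g = f bl then 0 else if f g = 0 then f bl else f g)" for g
  have "inj e"
  proof (rule injI)
    fix x y assume "e x = e y"
    then have "f x = f y" unfolding e_def by (auto split: if_splits)
    then show "x = y" using fi by (simp add: inj_eq)
  qed
  moreover have "e bl = 0" by (simp add: e_def)
  moreover have "e g < 2 ^ c" for g
  proof -
    have "e g < card (UNIV :: 'g set)" using fl[of g] fl[of bl] by (auto simp: e_def)
    then show ?thesis using assms by linarith
  qed
  ultimately show ?thesis by blast
qed

theorem theorem1:
  fixes M :: "('s::finite, 'a::finite, 'g::finite) tm"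
    and c :: nat and t :: "nat \<Rightarrow> real" and L :: "'a list set"
  assumes "c > 0"
    and "card (UNIV :: 'g set) \<le> 2 ^ c"
    and "tm_recognizes M L"
    and "\<forall>w. tm_space_within M w \<lfloor>log 2 (real (length w) + 2)\<rfloor>"
    and "\<forall>w. tm_halts_within M w (t (length w))"
  shows "\<exists>A :: 'a kfa. kfa_wf A \<and> fa_heads A = c + 5 \<and> fa_recognizes A L \<and>
           (\<forall>w. fa_halts_within A w
                 (t (length w) * ((2 * real c + 3 / 2) * real (length w) + 2 * real c + 2)))"
proof -
  obtain e :: "'g \<Rightarrow> nat" where e: "inj e" "e (tm_blank M) = 0" "\<And>g. e g < 2 ^ c"
    using enc_exists[OF assms(2), of "tm_blank M"] by blast
  have S: "sim M c e" by (unfold_locales) (use assms(1) e in auto)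
  have SW: "simw M c e w" for w
    by (intro simw.intro[OF S] simw_axioms.intro) (use assms(4) in auto)
  have main: "fa_halts_within (sim.FA M c e) w (t (length w) * (simw.B1 c w + 1)) \<and>
              (fa_accepts (sim.FA M c e) w = tm_accepts M w)" for w
    using simw.main_w[OF SW[of w], of "t (length w)"] assms(5) by blast
  have B: "simw.B1 c w + 1 = (2 * real c + 3 / 2) * real (length w) + 2 * real c + 2" for w :: "'a list"
    using simw.B1_def[OF SW[of w]] by simp
  show ?thesis
  proof (intro exI[of _ "sim.FA M c e"] conjI allI)
    show "kfa_wf (sim.FA M c e)" by (rule sim.FA_wf[OF S])
    show "fa_heads (sim.FA M c e) = c + 5" by (simp add: sim.FA_simps[OF S])
    show "fa_recognizes (sim.FA M c e) L"
      using main assms(3) by (auto simp: fa_recognizes_def tm_recognizes_def)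
    show "fa_halts_within (sim.FA M c e) w (t (length w) * ((2 * real c + 3 / 2) * real (length w) + 2 * real c + 2))" for w
      using main[of w] B[of w] by simp
  qed
qed


end
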